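(* Let $(H,A,C)$ be a Doi-Hopf datum and $\gamma:C\to\mathrm{Hom}(C,A)$ an $A$-integral. The following are equivalent: (1) $\gamma$ is total, i.e. $\sum\gamma(c_{(1)})(c_{(2)})=\varepsilon(c)1_A$ for all $c\in C$; (2) for all $c\in C$, $a\in A$: $\sum c_{(3)}\cdot\gamma(c_{(1)})(c_{(2)})_{<-1>}\otimes a\,\gamma(c_{(1)})(c_{(2)})_{<0>}=c\otimes a$ in $C\otimes A$; (3) for every Doi-Hopf module $M\in{}^C\mathcal M(H)_A$ and every $m\in M$: $\sum m_{<0>}\,\gamma(m_{<-2>})(m_{<-1>})=m$.
   Context: Sweedler notation $\Delta(c)=\sum c_{(1)}\otimes c_{(2)}$, $\rho(m)=\sum m_{<-1>}\otimes m_{<0>}$ (iterated $m_{<-2>}\otimes m_{<-1>}\otimes m_{<0>}$). Doi-Hopf datum $(H,A,C)$: $H$ bialgebra over commutative ring $k$, $A$ left $H$-comodule algebra, $C$ right $H$-module coalgebra ($\Delta(c\cdot h)=\sum c_{(1)}\cdot h_{(1)}\otimes c_{(2)}\cdot h_{(2)}$, $\varepsilon(c\cdot h)=\varepsilon(c)\varepsilon(h)$), $C$ flat. ${}^C\mathcal M(H)_A$: right $A$-modules $M$ with left $C$-coaction such that $\rho_M(ma)=\sum m_{<-1>}\cdot a_{<-1>}\otimes m_{<0>}a_{<0>}$. An $A$-integral is a $k$-linear $\gamma:C\to\mathrm{Hom}(C,A)$ with, for all $a\in A$, $c,d\in C$: (i) $\sum a_{<0>}\gamma(c\cdot a_{<-2>})(d\cdot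 a_{<-1>})=\gamma(c)(d)\,a$; (ii) $\sum c_{(1)}\otimes\gamma(c_{(2)})(d)=\sum d_{(2)}\cdot\gamma(c)(d_{(1)})_{<-1>}\otimes\gamma(c)(d_{(1)})_{<0>}$. *)

theory Defs
  imports Complex_Main
begin

text \<open>Modules carried by a type with class ab_group_add use
HOL equality; tensor products are quotients of lists of pairs.\<close>

record ('v, 'k) kmod =
  m_eq   :: "'v \<Rightarrow> 'v \<Rightarrow> bool"
  m_add  :: "'v \<Rightarrow> 'v \<Rightarrow> 'v"
  m_zero :: "'v"
  m_neg  :: "'v \<Rightarrow> 'v"
  m_smul :: "'k \<Rightarrow> 'v \<Rightarrow> 'v"

definition setoid_kmod :: "('v, 'k::comm_ring_1) kmod \<Rightarrow> bool" where
  "setoid_kmod V \<longleftrightarrow>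
     reflp (m_eq V) \<and> symp (m_eq V) \<and> transp (m_eq V) \<and>
     (\<forall>x x' y y'. m_eq V x x' \<longrightarrow> m_eq V y y' \<longrightarrow> m_eq V (m_add V x y) (m_add V x' y')) \<and>
     (\<forall>x x'. m_eq V x x' \<longrightarrow> m_eq V (m_neg V x) (m_neg V x')) \<and>
     (\<forall>r x x'. m_eq V x x' \<longrightarrow> m_eq V (m_smul V r x) (m_smul V r x')) \<and>
     (\<forall>x y z. m_eq V (m_add V (m_add V x y) z) (m_add V x (m_add V y z))) \<and>
     (\<forall>x y. m_eq V (m_add V x y) (m_add V y x)) \<and>
     (\<forall>x. m_eq V (m_add V (m_zero V) x) x) \<and>
     (\<forall>x. m_eq V (m_add V (m_neg V x) x) (m_zero V)) \<and>
     (\<forall>r x y. m_eq V (m_smul V r (m_add V x y)) (m_add V (m_smul V r x) (m_smul V r y))) \<and>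
     (\<forall>r s x. m_eq V (m_smul V (r + s) x) (m_add V (m_smul V r x) (m_smul V s x))) \<and>
     (\<forall>r s x. m_eq V (m_smul V r (m_smul V s x)) (m_smul V (r * s) x)) \<and>
     (\<forall>x. m_eq V (m_smul V 1 x) x)"

definition msum :: "('v, 'k) kmod \<Rightarrow> 'v list \<Rightarrow> 'v" where
  "msum V xs = foldr (m_add V) xs (m_zero V)"

definition cmod :: "('k::comm_ring_1 \<Rightarrow> 'v::ab_group_add \<Rightarrow> 'v) \<Rightarrow> ('v, 'k) kmod" where
  "cmod sc = \<lparr>m_eq = (=), m_add = (+), m_zero = 0, m_neg = uminus, m_smul = sc\<rparr>"

text \<open>A list [(v1,w1),...,(vn,wn)] represents the element sum vi (x) wi of V (x)_k W.
teq V W xs ys holds iff xs and ys represent the same element of V (x)_k W: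
it is the least equivalence relation, compatible with concatenation (the sum),
containing commutativity of the sum and the defining relations of the tensor product
(bi-additivity, k-balancedness, compatibility with the equalities of V and W).\<close>

inductive teq :: "('v, 'k) kmod \<Rightarrow> ('w, 'k) kmod \<Rightarrow> ('v \<times> 'w) list \<Rightarrow> ('v \<times> 'w) list \<Rightarrow> bool"
  for V W where
  teq_refl:  "teq V W xs xs"
| teq_sym:   "teq V W xs ys \<Longrightarrow> teq V W ys xs"
| teq_trans: "teq V W xs ys \<Longrightarrow> teq V W ys zs \<Longrightarrow> teq V W xs zs"
| teq_app:   "teq V W xs xs' \<Longrightarrow> teq V W ys ys' \<Longrightarrow> teq V W (xs @ ys) (xs' @ ys')"
| teq_comm:  "teq V W (xs @ ys) (ys @ xs)"
| teq_eql:   "m_eq V v v' \<Longrightarrow> teq V W [(v, w)] [(v', w)]"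
| teq_eqr:   "m_eq W w w' \<Longrightarrow> teq V W [(v, w)] [(v, w')]"
| teq_addl:  "teq V W [(m_add V v v', w)] [(v, w), (v', w)]"
| teq_addr:  "teq V W [(v, m_add W w w')] [(v, w), (v, w')]"
| teq_zerol: "teq V W [(m_zero V, w)] []"
| teq_zeror: "teq V W [(v, m_zero W)] []"
| teq_bal:   "teq V W [(m_smul V r v, w)] [(v, m_smul W r w)]"

definition tensor :: "('v, 'k) kmod \<Rightarrow> ('w, 'k) kmod \<Rightarrow> (('v \<times> 'w) list, 'k) kmod" where
  "tensor V W = \<lparr>m_eq = teq V W, m_add = (@), m_zero = [],
                 m_neg = map (\<lambda>(v, w). (m_neg V v, w)),
                 m_smul = (\<lambda>r. map (\<lambda>(v, w). (m_smul V r v, w)))\<rparr>"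

text \<open>(Delta (x) id) applied to sum xi (x) yi, landing in X (x) (X (x) Y).\<close>
definition dl :: "('x \<Rightarrow> ('x \<times> 'x) list) \<Rightarrow> ('x \<times> 'y) list \<Rightarrow> ('x \<times> ('x \<times> 'y) list) list" where
  "dl \<Delta> xs = concat (map (\<lambda>(p, q). map (\<lambda>(p1, p2). (p1, [(p2, q)])) (\<Delta> p)) xs)"

text \<open>(id (x) rho) applied to sum xi (x) yi.\<close>
definition dr :: "('y \<Rightarrow> ('x \<times> 'z) list) \<Rightarrow> ('x \<times> 'y) list \<Rightarrow> ('x \<times> ('x \<times> 'z) list) list" where
  "dr \<rho> xs = map (\<lambda>(p, q). (p, \<rho> q)) xs"

text \<open>Flatness of a k-module, via the equational criterion (Lazard/Bourbaki):
every relation sum ai ci = 0 is a consequence of relations with coefficients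
killed by the ai.\<close>
definition flat_module :: "('k::comm_ring_1 \<Rightarrow> 'c::ab_group_add \<Rightarrow> 'c) \<Rightarrow> bool" where
  "flat_module sC \<longleftrightarrow>
     (\<forall>(n::nat) (a::nat \<Rightarrow> 'k) (c::nat \<Rightarrow> 'c). (\<Sum>i<n. sC (a i) (c i)) = 0 \<longrightarrow>
        (\<exists>(m::nat) (b::nat \<Rightarrow> nat \<Rightarrow> 'k) (d::nat \<Rightarrow> 'c).
           (\<forall>i<n. c i = (\<Sum>j<m. sC (b i j) (d j))) \<and>
           (\<forall>j<m. (\<Sum>i<n. a i * b i j) = 0)))"

definition kalgebra :: "('k::comm_ring_1 \<Rightarrow> 'h::ring_1 \<Rightarrow> 'h) \<Rightarrow> bool" where
  "kalgebra sH \<longleftrightarrow> module sH \<and>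
     (\<forall>r x y. sH r (x * y) = sH r x * y \<and> sH r (x * y) = x * sH r y)"

definition bialgebra ::
  "('k::comm_ring_1 \<Rightarrow> 'h::ring_1 \<Rightarrow> 'h) \<Rightarrow> ('h \<Rightarrow> ('h \<times> 'h) list) \<Rightarrow> ('h \<Rightarrow> 'k) \<Rightarrow> bool" where
  "bialgebra sH \<Delta>H \<epsilon>H \<longleftrightarrow>
     kalgebra sH \<and>
     (\<forall>x y. teq (cmod sH) (cmod sH) (\<Delta>H (x + y)) (\<Delta>H x @ \<Delta>H y)) \<and>
     (\<forall>r x. teq (cmod sH) (cmod sH) (\<Delta>H (sH r x)) (map (\<lambda>(p, q). (sH r p, q)) (\<Delta>H x))) \<and>
     (\<forall>x. teq (cmod sH) (tensor (cmod sH) (cmod sH)) (dl \<Delta>H (\<Delta>H x)) (dr \<Delta>H (\<Delta>H x))) \<and>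
     (\<forall>x y. \<epsilon>H (x + y) = \<epsilon>H x + \<epsilon>H y) \<and>
     (\<forall>r x. \<epsilon>H (sH r x) = r * \<epsilon>H x) \<and>
     (\<forall>x. sum_list (map (\<lambda>(p, q). sH (\<epsilon>H p) q) (\<Delta>H x)) = x) \<and>
     (\<forall>x. sum_list (map (\<lambda>(p, q). sH (\<epsilon>H q) p) (\<Delta>H x)) = x) \<and>
     (\<forall>x y. teq (cmod sH) (cmod sH) (\<Delta>H (x * y))
              (concat (map (\<lambda>(p, q). map (\<lambda>(p', q'). (p * p', q * q')) (\<Delta>H y)) (\<Delta>H x)))) \<and>
     teq (cmod sH) (cmod sH) (\<Delta>H 1) [(1, 1)] \<and>
     (\<forall>x y. \<epsilon>H (x * y) = \<epsilon>H x * \<epsilon>H y) \<and>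
     \<epsilon>H 1 = 1"

text \<open>Left H-comodule algebra A with coaction rho(a) = sum a<-1> (x) a<0>.\<close>
definition comodule_algebra ::
  "('k::comm_ring_1 \<Rightarrow> 'h::ring_1 \<Rightarrow> 'h) \<Rightarrow> ('h \<Rightarrow> ('h \<times> 'h) list) \<Rightarrow> ('h \<Rightarrow> 'k) \<Rightarrow>
   ('k \<Rightarrow> 'a::ring_1 \<Rightarrow> 'a) \<Rightarrow> ('a \<Rightarrow> ('h \<times> 'a) list) \<Rightarrow> bool" where
  "comodule_algebra sH \<Delta>H \<epsilon>H sA \<rho>A \<longleftrightarrow>
     kalgebra sA \<and>
     (\<forall>a b. teq (cmod sH) (cmod sA) (\<rho>A (a + b)) (\<rho>A a @ \<rho>A b)) \<and>
     (\<forall>r a. teq (cmod sH) (cmod sA) (\<rho>A (sA r a)) (map (\<lambda>(h, x). (sH r h, x)) (\<rho>A a))) \<and>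
     (\<forall>a. teq (cmod sH) (tensor (cmod sH) (cmod sA)) (dl \<Delta>H (\<rho>A a)) (dr \<rho>A (\<rho>A a))) \<and>
     (\<forall>a. sum_list (map (\<lambda>(h, x). sA (\<epsilon>H h) x) (\<rho>A a)) = a) \<and>
     (\<forall>a b. teq (cmod sH) (cmod sA) (\<rho>A (a * b))
              (concat (map (\<lambda>(h, x). map (\<lambda>(h', y). (h * h', x * y)) (\<rho>A b)) (\<rho>A a)))) \<and>
     teq (cmod sH) (cmod sA) (\<rho>A 1) [(1, 1)]"

text \<open>Right H-module coalgebra C, action actC c h = c . h.\<close>
definition module_coalgebra ::
  "('k::comm_ring_1 \<Rightarrow> 'h::ring_1 \<Rightarrow> 'h) \<Rightarrow> ('h \<Rightarrow> ('h \<times> 'h) list) \<Rightarrow> ('h \<Rightarrow> 'k) \<Rightarrow>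
   ('k \<Rightarrow> 'c::ab_group_add \<Rightarrow> 'c) \<Rightarrow> ('c \<Rightarrow> ('c \<times> 'c) list) \<Rightarrow> ('c \<Rightarrow> 'k) \<Rightarrow>
   ('c \<Rightarrow> 'h \<Rightarrow> 'c) \<Rightarrow> bool" where
  "module_coalgebra sH \<Delta>H \<epsilon>H sC \<Delta>C \<epsilon>C actC \<longleftrightarrow>
     module sC \<and>
     (\<forall>x y. teq (cmod sC) (cmod sC) (\<Delta>C (x + y)) (\<Delta>C x @ \<Delta>C y)) \<and>
     (\<forall>r x. teq (cmod sC) (cmod sC) (\<Delta>C (sC r x)) (map (\<lambda>(p, q). (sC r p, q)) (\<Delta>C x))) \<and>
     (\<forall>x. teq (cmod sC) (tensor (cmod sC) (cmod sC)) (dl \<Delta>C (\<Delta>C x)) (dr \<Delta>C (\<Delta>C x))) \<and>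
     (\<forall>x y. \<epsilon>C (x + y) = \<epsilon>C x + \<epsilon>C y) \<and>
     (\<forall>r x. \<epsilon>C (sC r x) = r * \<epsilon>C x) \<and>
     (\<forall>x. sum_list (map (\<lambda>(p, q). sC (\<epsilon>C p) q) (\<Delta>C x)) = x) \<and>
     (\<forall>x. sum_list (map (\<lambda>(p, q). sC (\<epsilon>C q) p) (\<Delta>C x)) = x) \<and>
     (\<forall>c d h. actC (c + d) h = actC c h + actC d h) \<and>
     (\<forall>c h g. actC c (h + g) = actC c h + actC c g) \<and>
     (\<forall>r c h. actC (sC r c) h = sC r (actC c h) \<and> actC c (sH r h) = sC r (actC c h)) \<and>
     (\<forall>c. actC c 1 = c) \<and>
     (\<forall>c h g. actC (actC c h) g = actC c (h * g)) \<and>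
     (\<forall>c h. teq (cmod sC) (cmod sC) (\<Delta>C (actC c h))
              (concat (map (\<lambda>(c1, c2). map (\<lambda>(h1, h2). (actC c1 h1, actC c2 h2)) (\<Delta>H h)) (\<Delta>C c)))) \<and>
     (\<forall>c h. \<epsilon>C (actC c h) = \<epsilon>C c * \<epsilon>H h)"

definition doi_hopf_datum ::
  "('k::comm_ring_1 \<Rightarrow> 'h::ring_1 \<Rightarrow> 'h) \<Rightarrow> ('h \<Rightarrow> ('h \<times> 'h) list) \<Rightarrow> ('h \<Rightarrow> 'k) \<Rightarrow>
   ('k \<Rightarrow> 'a::ring_1 \<Rightarrow> 'a) \<Rightarrow> ('a \<Rightarrow> ('h \<times> 'a) list) \<Rightarrow>
   ('k \<Rightarrow> 'c::ab_group_add \<Rightarrow> 'c) \<Rightarrow> ('c \<Rightarrow> ('c \<times> 'c) list) \<Rightarrow> ('c \<Rightarrow> 'k) \<Rightarrow>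
   ('c \<Rightarrow> 'h \<Rightarrow> 'c) \<Rightarrow> bool" where
  "doi_hopf_datum sH \<Delta>H \<epsilon>H sA \<rho>A sC \<Delta>C \<epsilon>C actC \<longleftrightarrow>
     bialgebra sH \<Delta>H \<epsilon>H \<and> comodule_algebra sH \<Delta>H \<epsilon>H sA \<rho>A \<and>
     module_coalgebra sH \<Delta>H \<epsilon>H sC \<Delta>C \<epsilon>C actC \<and> flat_module sC"

text \<open>gamma c d stands for gamma(c)(d); gamma is k-linear C -> Hom_k(C,A).\<close>
definition A_integral ::
  "('k::comm_ring_1 \<Rightarrow> 'h::ring_1 \<Rightarrow> 'h) \<Rightarrow> ('h \<Rightarrow> ('h \<times> 'h) list) \<Rightarrow>
   ('k \<Rightarrow> 'a::ring_1 \<Rightarrow> 'a) \<Rightarrow> ('a \<Rightarrow> ('h \<times> 'a) list) \<Rightarrow>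
   ('k \<Rightarrow> 'c::ab_group_add \<Rightarrow> 'c) \<Rightarrow> ('c \<Rightarrow> ('c \<times> 'c) list) \<Rightarrow>
   ('c \<Rightarrow> 'h \<Rightarrow> 'c) \<Rightarrow> ('c \<Rightarrow> 'c \<Rightarrow> 'a) \<Rightarrow> bool" where
  "A_integral sH \<Delta>H sA \<rho>A sC \<Delta>C actC \<gamma> \<longleftrightarrow>
     (\<forall>c c' d. \<gamma> (c + c') d = \<gamma> c d + \<gamma> c' d) \<and>
     (\<forall>r c d. \<gamma> (sC r c) d = sA r (\<gamma> c d)) \<and>
     (\<forall>c d d'. \<gamma> c (d + d') = \<gamma> c d + \<gamma> c d') \<and>
     (\<forall>r c d. \<gamma> c (sC r d) = sA r (\<gamma> c d)) \<and>
     (\<forall>a c d. sum_list (concat (map (\<lambda>(h, x). map (\<lambda>(h1, h2). x * \<gamma> (actC c h1) (actC d h2)) (\<Delta>H h))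
                                 (\<rho>A a))) = \<gamma> c d * a) \<and>
     (\<forall>c d. teq (cmod sC) (cmod sA)
              (map (\<lambda>(c1, c2). (c1, \<gamma> c2 d)) (\<Delta>C c))
              (concat (map (\<lambda>(d1, d2). map (\<lambda>(h, x). (actC d2 h, x)) (\<rho>A (\<gamma> c d1))) (\<Delta>C d))))"

definition total_integral :: "('k::comm_ring_1 \<Rightarrow> 'a::ring_1 \<Rightarrow> 'a) \<Rightarrow>
   ('c \<Rightarrow> ('c \<times> 'c) list) \<Rightarrow> ('c \<Rightarrow> 'k) \<Rightarrow> ('c \<Rightarrow> 'c \<Rightarrow> 'a) \<Rightarrow> bool" where
  "total_integral sA \<Delta>C \<epsilon>C \<gamma> \<longleftrightarrow>
     (\<forall>c. sum_list (map (\<lambda>(c1, c2). \<gamma> c1 c2) (\<Delta>C c)) = sA (\<epsilon>C c) 1)"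

text \<open>M in C-M(H)_A: a k-module M (setoid presentation) with right A-action actM and
left C-coaction rhoM(m) = sum m<-1> (x) m<0>.\<close>
definition doi_hopf_module ::
  "('k::comm_ring_1 \<Rightarrow> 'h::ring_1 \<Rightarrow> 'h) \<Rightarrow>
   ('k \<Rightarrow> 'a::ring_1 \<Rightarrow> 'a) \<Rightarrow> ('a \<Rightarrow> ('h \<times> 'a) list) \<Rightarrow>
   ('k \<Rightarrow> 'c::ab_group_add \<Rightarrow> 'c) \<Rightarrow> ('c \<Rightarrow> ('c \<times> 'c) list) \<Rightarrow> ('c \<Rightarrow> 'k) \<Rightarrow>
   ('c \<Rightarrow> 'h \<Rightarrow> 'c) \<Rightarrow>
   ('m, 'k) kmod \<Rightarrow> ('m \<Rightarrow> 'a \<Rightarrow> 'm) \<Rightarrow> ('m \<Rightarrow> ('c \<times> 'm) list) \<Rightarrow> bool" where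
  "doi_hopf_module sH sA \<rho>A sC \<Delta>C \<epsilon>C actC M actM \<rho>M \<longleftrightarrow>
     setoid_kmod M \<and>
     (\<forall>m m' a. m_eq M m m' \<longrightarrow> m_eq M (actM m a) (actM m' a)) \<and>
     (\<forall>m m' a. m_eq M (actM (m_add M m m') a) (m_add M (actM m a) (actM m' a))) \<and>
     (\<forall>m a b. m_eq M (actM m (a + b)) (m_add M (actM m a) (actM m b))) \<and>
     (\<forall>r m a. m_eq M (actM (m_smul M r m) a) (m_smul M r (actM m a)) \<and>
              m_eq M (actM m (sA r a)) (m_smul M r (actM m a))) \<and>
     (\<forall>m. m_eq M (actM m 1) m) \<and>
     (\<forall>m a b. m_eq M (actM (actM m a) b) (actM m (a * b))) \<and>
     (\<forall>m m'. m_eq M m m' \<longrightarrow> teq (cmod sC) M (\<rho>M m) (\<rho>M m')) \<and>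
     (\<forall>m m'. teq (cmod sC) M (\<rho>M (m_add M m m')) (\<rho>M m @ \<rho>M m')) \<and>
     (\<forall>r m. teq (cmod sC) M (\<rho>M (m_smul M r m)) (map (\<lambda>(c, x). (sC r c, x)) (\<rho>M m))) \<and>
     (\<forall>m. teq (cmod sC) (tensor (cmod sC) M) (dl \<Delta>C (\<rho>M m)) (dr \<rho>M (\<rho>M m))) \<and>
     (\<forall>m. m_eq M (msum M (map (\<lambda>(c, x). m_smul M (\<epsilon>C c) x) (\<rho>M m))) m) \<and>
     (\<forall>m a. teq (cmod sC) M (\<rho>M (actM m a))
              (concat (map (\<lambda>(c, x). map (\<lambda>(h, b). (actC c h, actM x b)) (\<rho>A a)) (\<rho>M m))))"

text \<open>Condition (3) for a given module: sum m<0> gamma(m<-2>)(m<-1>) = m,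
with m<-2> (x) m<-1> (x) m<0> = (id (x) rho) rho(m).\<close>
definition integral_normalizes ::
  "('m, 'k) kmod \<Rightarrow> ('m \<Rightarrow> 'a \<Rightarrow> 'm) \<Rightarrow> ('m \<Rightarrow> ('c \<times> 'm) list) \<Rightarrow> ('c \<Rightarrow> 'c \<Rightarrow> 'a) \<Rightarrow> bool" where
  "integral_normalizes M actM \<rho>M \<gamma> \<longleftrightarrow>
     (\<forall>m. m_eq M (msum M (concat (map (\<lambda>(c, y). map (\<lambda>(d, x). actM x (\<gamma> c d)) (\<rho>M y)) (\<rho>M m)))) m)"

end

theory Submission
  imports Defs "HOL-Library.Multiset"
begin

lemma cmod_simps[simp]:
  "m_eq (cmod s) = (=)" "m_add (cmod s) = (+)" "m_zero (cmod s) = 0"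
  "m_neg (cmod s) = uminus" "m_smul (cmod s) = s"
  by (simp_all add: cmod_def)

lemma tensor_simps[simp]:
  "m_eq (tensor V W) = teq V W" "m_add (tensor V W) = (@)" "m_zero (tensor V W) = []"
  "m_neg (tensor V W) = map (\<lambda>(v, w). (m_neg V v, w))"
  "m_smul (tensor V W) = (\<lambda>r. map (\<lambda>(v, w). (m_smul V r v, w)))"
  by (simp_all add: tensor_def)

lemma teq_map:
  assumes "teq V W xs ys"
  and eql: "\<And>v v' w. m_eq V v v' \<Longrightarrow> teq V' W' (g v w) (g v' w)"
  and eqr: "\<And>v w w'. m_eq W w w' \<Longrightarrow> teq V' W' (g v w) (g v w')"
  and addl: "\<And>v v' w. teq V' W' (g (m_add V v v') w) (g v w @ g v' w)"
  and addr: "\<And>v w w'. teq V' W' (g v (m_add W w w')) (g v w @ g v w')"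
  and zerol: "\<And>w. teq V' W' (g (m_zero V) w) []"
  and zeror: "\<And>v. teq V' W' (g v (m_zero W)) []"
  and bal: "\<And>r v w. teq V' W' (g (m_smul V r v) w) (g v (m_smul W r w))"
  shows "teq V' W' (concat (map (\<lambda>(v,w). g v w) xs)) (concat (map (\<lambda>(v,w). g v w) ys))"
  using assms(1)
proof induction
  case (teq_refl xs) then show ?case by (rule teq.teq_refl)
next
  case (teq_sym xs ys) show ?case using teq_sym.IH by (rule teq.teq_sym)
next
  case (teq_trans xs ys zs) show ?case using teq_trans.IH by (rule teq.teq_trans)
next
  case (teq_app xs xs' ys ys') show ?case using teq_app.IH by (simp add: teq.teq_app)
next
  case (teq_comm xs ys) then show ?case by (simp add: teq.teq_comm)
qed (simp_all add: assms)

lemma teq_sum: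
  fixes f :: "_ \<Rightarrow> _ \<Rightarrow> 'b::comm_monoid_add"
  assumes "teq V W xs ys"
  and eql: "\<And>v v' w. m_eq V v v' \<Longrightarrow> f v w = f v' w"
  and eqr: "\<And>v w w'. m_eq W w w' \<Longrightarrow> f v w = f v w'"
  and addl: "\<And>v v' w. f (m_add V v v') w = f v w + f v' w"
  and addr: "\<And>v w w'. f v (m_add W w w') = f v w + f v w'"
  and zerol: "\<And>w. f (m_zero V) w = 0"
  and zeror: "\<And>v. f v (m_zero W) = 0"
  and bal: "\<And>r v w. f (m_smul V r v) w = f v (m_smul W r w)"
  shows "sum_list (map (\<lambda>(v,w). f v w) xs) = sum_list (map (\<lambda>(v,w). f v w) ys)"
  using assms(1)
  by induction (simp_all add: assms add_ac)

lemma sk_refl: assumes "setoid_kmod M" shows "m_eq M x x"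
  using assms unfolding setoid_kmod_def by (elim conjE) (simp add: reflpD sympD)

lemma sk_sym: assumes "setoid_kmod M" shows "m_eq M x y \<Longrightarrow> m_eq M y x"
  using assms unfolding setoid_kmod_def by (elim conjE) (simp add: reflpD sympD)

lemma sk_trans: assumes "setoid_kmod M" shows "m_eq M x y \<Longrightarrow> m_eq M y z \<Longrightarrow> m_eq M x z"
  using assms unfolding setoid_kmod_def by (elim conjE) (metis transpD)

lemma sk_add: assumes "setoid_kmod M" shows "m_eq M x x' \<Longrightarrow> m_eq M y y' \<Longrightarrow> m_eq M (m_add M x y) (m_add M x' y')"
  using assms unfolding setoid_kmod_def by (elim conjE) (simp add: reflpD sympD)

lemma sk_neg: assumes "setoid_kmod M" shows "m_eq M x x' \<Longrightarrow> m_eq M (m_neg M x) (m_neg M x')"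
  using assms unfolding setoid_kmod_def by (elim conjE) (simp add: reflpD sympD)

lemma sk_smul: assumes "setoid_kmod M" shows "m_eq M x x' \<Longrightarrow> m_eq M (m_smul M r x) (m_smul M r x')"
  using assms unfolding setoid_kmod_def by (elim conjE) (simp add: reflpD sympD)

lemma sk_assoc: assumes "setoid_kmod M" shows "m_eq M (m_add M (m_add M x y) z) (m_add M x (m_add M y z))"
  using assms unfolding setoid_kmod_def by (elim conjE) (simp add: reflpD sympD)

lemma sk_comm: assumes "setoid_kmod M" shows "m_eq M (m_add M x y) (m_add M y x)"
  using assms unfolding setoid_kmod_def by (elim conjE) (simp add: reflpD sympD)

lemma sk_zero: assumes "setoid_kmod M" shows "m_eq M (m_add M (m_zero M) x) x"
  using assms unfolding setoid_kmod_def by (elim conjE) (simp add: reflpD sympD)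

lemma sk_negl: assumes "setoid_kmod M" shows "m_eq M (m_add M (m_neg M x) x) (m_zero M)"
  using assms unfolding setoid_kmod_def by (elim conjE) (simp add: reflpD sympD)

lemma sk_sdistr: assumes "setoid_kmod M" shows "m_eq M (m_smul M r (m_add M x y)) (m_add M (m_smul M r x) (m_smul M r y))"
  using assms unfolding setoid_kmod_def by (elim conjE) (simp add: reflpD sympD)

lemma sk_sdistl: assumes "setoid_kmod M" shows "m_eq M (m_smul M (r + s) x) (m_add M (m_smul M r x) (m_smul M s x))"
  using assms unfolding setoid_kmod_def by (elim conjE) (simp add: reflpD sympD)

lemma sk_sass: assumes "setoid_kmod M" shows "m_eq M (m_smul M r (m_smul M s x)) (m_smul M (r * s) x)"
  using assms unfolding setoid_kmod_def by (elim conjE) (simp add: reflpD sympD)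

lemma sk_one: assumes "setoid_kmod M" shows "m_eq M (m_smul M 1 x) x"
  using assms unfolding setoid_kmod_def by (elim conjE) (simp add: reflpD sympD)

lemma sk_zero_r: "setoid_kmod M \<Longrightarrow> m_eq M (m_add M x (m_zero M)) x"
  by (rule sk_trans[OF _ sk_comm sk_zero])

lemma msum_single: "setoid_kmod M \<Longrightarrow> m_eq M (msum M [x]) x"
  by (simp add: msum_def sk_zero_r)

lemma msum_two: "setoid_kmod M \<Longrightarrow> m_eq M (msum M [x, y]) (m_add M x y)"
  by (simp add: msum_def sk_add sk_refl sk_zero_r)

lemma msum_append: "setoid_kmod M \<Longrightarrow> m_eq M (msum M (xs @ ys)) (m_add M (msum M xs) (msum M ys))"
proof (induction xs)
  case Nil
  then show ?case unfolding msum_def by (simp add: sk_sym sk_zero)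
next
  case (Cons x xs)
  then show ?case unfolding msum_def
    using sk_trans[OF Cons.prems sk_add[OF Cons.prems sk_refl[OF Cons.prems] Cons.IH[OF Cons.prems, unfolded msum_def]]
       sk_sym[OF Cons.prems sk_assoc[OF Cons.prems]]] by simp
qed

lemma teq_msum:
  assumes M: "setoid_kmod M" and "teq V W xs ys"
  and eql: "\<And>v v' w. m_eq V v v' \<Longrightarrow> m_eq M (f v w) (f v' w)"
  and eqr: "\<And>v w w'. m_eq W w w' \<Longrightarrow> m_eq M (f v w) (f v w')"
  and addl: "\<And>v v' w. m_eq M (f (m_add V v v') w) (m_add M (f v w) (f v' w))"
  and addr: "\<And>v w w'. m_eq M (f v (m_add W w w')) (m_add M (f v w) (f v w'))"
  and zerol: "\<And>w. m_eq M (f (m_zero V) w) (m_zero M)"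
  and zeror: "\<And>v. m_eq M (f v (m_zero W)) (m_zero M)"
  and bal: "\<And>r v w. m_eq M (f (m_smul V r v) w) (f v (m_smul W r w))"
  shows "m_eq M (msum M (map (\<lambda>(v,w). f v w) xs)) (msum M (map (\<lambda>(v,w). f v w) ys))"
  using assms(2)
proof induction
  case (teq_refl xs) then show ?case using M by (rule sk_refl)
next
  case (teq_sym xs ys) show ?case using sk_sym[OF M teq_sym.IH] .
next
  case (teq_trans xs ys zs) show ?case using sk_trans[OF M teq_trans.IH] .
next
  case (teq_app xs xs' ys ys')
  show ?case
    using sk_trans[OF M msum_append[OF M] sk_trans[OF M sk_add[OF M teq_app.IH] sk_sym[OF M msum_append[OF M]]]] by simp
next
  case (teq_comm xs ys)
  show ?case
    using sk_trans[OF M msum_append[OF M] sk_trans[OF M sk_comm[OF M] sk_sym[OF M msum_append[OF M]]]] by simp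
next
  case (teq_eql v v' w)
  then show ?case using M by (simp add: msum_def sk_add sk_refl eql)
next
  case (teq_eqr w w' v)
  then show ?case using M by (simp add: msum_def sk_add sk_refl eqr)
next
  case (teq_addl v v' w)
  show ?case using sk_trans[OF M msum_single[OF M] sk_trans[OF M addl sk_sym[OF M msum_two[OF M]]]] by simp
next
  case (teq_addr v w w')
  show ?case using sk_trans[OF M msum_single[OF M] sk_trans[OF M addr sk_sym[OF M msum_two[OF M]]]] by simp
next
  case (teq_zerol w)
  show ?case using sk_trans[OF M msum_single[OF M] zerol] by (simp add: msum_def)
next
  case (teq_zeror v)
  show ?case using sk_trans[OF M msum_single[OF M] zeror] by (simp add: msum_def)
next
  case (teq_bal r v w)
  then show ?case using M by (simp add: msum_def sk_add sk_refl bal)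
qed


lemma teq_concat_pw:
  "(\<And>x. x \<in> set L \<Longrightarrow> teq V W (f x) (g x)) \<Longrightarrow> teq V W (concat (map f L)) (concat (map g L))"
  by (induction L) (auto intro: teq.intros)

lemma teq_concat_nil:
  "(\<And>x. x \<in> set L \<Longrightarrow> teq V W (f x) []) \<Longrightarrow> teq V W (concat (map f L)) []"
proof (induction L)
  case Nil then show ?case by (simp add: teq_refl)
next
  case (Cons a L)
  then have "teq V W (f a @ concat (map f L)) ([] @ [])" by (intro teq_app) auto
  then show ?case by simp
qed

lemma teq_perm: "mset xs = mset ys \<Longrightarrow> teq V W xs ys"
proof (induction xs arbitrary: ys)
  case Nil then show ?case by (simp add: teq.teq_refl)
next
  case (Cons x xs)
  then have "x \<in> set ys" by (metis list.set_intros(1) set_mset_mset)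
  then obtain ys1 ys2 where ys: "ys = ys1 @ x # ys2" by (meson split_list)
  with Cons.prems have "mset xs = mset (ys1 @ ys2)" by simp
  then have 1: "teq V W xs (ys1 @ ys2)" by (rule Cons.IH)
  have 2: "teq V W ([x] @ xs) ([x] @ (ys1 @ ys2))" by (rule teq_app[OF teq_refl 1])
  have 3: "teq V W (([x] @ ys1) @ ys2) ((ys1 @ [x]) @ ys2)" by (rule teq_app[OF teq_comm teq_refl])
  have 4: "teq V W ([x] @ ys1 @ ys2) (ys1 @ [x] @ ys2)" using 3 by simp
  show ?case using teq_trans[OF 2 4] ys by simp
qed

lemma mset_concat_map_app:
  "mset (concat (map (\<lambda>x. f x @ g x) L)) = mset (concat (map f L) @ concat (map g L))"
  by (induction L) auto

lemma teq_interleave: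
  "teq V W (concat (map (\<lambda>x. f x @ g x) L)) (concat (map f L) @ concat (map g L))"
  by (rule teq_perm[OF mset_concat_map_app])

lemma teq_swap:
  "teq V W (concat (map (\<lambda>x. concat (map (\<lambda>y. f x y) L2)) L1))
           (concat (map (\<lambda>y. concat (map (\<lambda>x. f x y) L1)) L2))"
proof (rule teq_perm)
  show "mset (concat (map (\<lambda>x. concat (map (f x) L2)) L1)) =
    mset (concat (map (\<lambda>y. concat (map (\<lambda>x. f x y) L1)) L2))"
  proof (induction L1)
    case Nil then show ?case by (induction L2) auto
  next
    case (Cons a L1)
    have "mset (concat (map (\<lambda>y. concat (map (\<lambda>x. f x y) (a # L1))) L2)) =
          mset (concat (map (\<lambda>y. f a y) L2)) + mset (concat (map (\<lambda>y. concat (map (\<lambda>x. f x y) L1)) L2))"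
      using mset_concat_map_app[of "\<lambda>y. f a y" "\<lambda>y. concat (map (\<lambda>x. f x y) L1)" L2] by simp
    then show ?case using Cons by simp
  qed
qed

lemma teq_sum_left:
  "teq (cmod s) W [(sum_list xs, w)] (map (\<lambda>x. (x, w)) xs)"
proof (induction xs)
  case Nil then show ?case using teq_zerol[of "cmod s" W w] by simp
next
  case (Cons x xs)
  have "teq (cmod s) W [(x + sum_list xs, w)] [(x, w), (sum_list xs, w)]"
    using teq_addl[of "cmod s" W x "sum_list xs" w] by simp
  moreover have "teq (cmod s) W ([(x, w)] @ [(sum_list xs, w)]) ([(x, w)] @ map (\<lambda>x. (x, w)) xs)"
    by (rule teq_app[OF teq_refl Cons.IH])
  ultimately show ?case by (simp add: teq_trans)
qed

lemma sum_list_concat': "sum_list (concat xss) = sum_list (map sum_list xss)"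
  by (induction xss) auto

lemma concat_map_single: "concat (map (\<lambda>x. [f x]) L) = map f L"
  by (induction L) auto

lemma concat_map_single2: "concat (map (\<lambda>(p, q). [f p q]) L) = map (\<lambda>(p, q). f p q) L"
  by (induction L) auto

lemma teq_map_nil:
  assumes "\<And>p q. (p, q) \<in> set L \<Longrightarrow> teq V W [f p q] []"
  shows "teq V W (map (\<lambda>(p, q). f p q) L) []"
proof -
  have "teq V W (concat (map (\<lambda>(p, q). [f p q]) L)) []"
    by (rule teq_concat_nil) (use assms in auto)
  then show ?thesis by (simp add: concat_map_single2)
qed

lemma teq_zerol_c: "teq (cmod s) W [(0, w)] []"
  using teq_zerol[of "cmod s" W w] by simp
lemma teq_zeror_c: "teq V (cmod s) [(v, 0)] []"
  using teq_zeror[of V "cmod s" v] by simp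

lemma (in module) scale_sum_list: "scale r (sum_list (map f L)) = sum_list (map (\<lambda>x. scale r (f x)) L)"
  by (induction L) (auto simp: scale_right_distrib)

locale DH =
  fixes sH :: "'k::comm_ring_1 \<Rightarrow> 'h::ring_1 \<Rightarrow> 'h"
    and \<Delta>H :: "'h \<Rightarrow> ('h \<times> 'h) list" and \<epsilon>H :: "'h \<Rightarrow> 'k"
    and sA :: "'k \<Rightarrow> 'a::ring_1 \<Rightarrow> 'a" and \<rho>A :: "'a \<Rightarrow> ('h \<times> 'a) list"
    and sC :: "'k \<Rightarrow> 'c::ab_group_add \<Rightarrow> 'c" and \<Delta>C :: "'c \<Rightarrow> ('c \<times> 'c) list"
    and \<epsilon>C :: "'c \<Rightarrow> 'k" and actC :: "'c \<Rightarrow> 'h \<Rightarrow> 'c"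
    and \<gamma> :: "'c \<Rightarrow> 'c \<Rightarrow> 'a"
  assumes datum: "doi_hopf_datum sH \<Delta>H \<epsilon>H sA \<rho>A sC \<Delta>C \<epsilon>C actC"
    and integral: "A_integral sH \<Delta>H sA \<rho>A sC \<Delta>C actC \<gamma>"
begin

lemma MC: "module_coalgebra sH \<Delta>H \<epsilon>H sC \<Delta>C \<epsilon>C actC"
  using datum by (simp add: doi_hopf_datum_def)
lemma CA: "comodule_algebra sH \<Delta>H \<epsilon>H sA \<rho>A"
  using datum by (simp add: doi_hopf_datum_def)
lemma BA: "bialgebra sH \<Delta>H \<epsilon>H"
  using datum by (simp add: doi_hopf_datum_def)

lemma mC: "module sC" using MC by (simp add: module_coalgebra_def)
lemma mA: "module sA" using CA by (simp add: comodule_algebra_def kalgebra_def)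
lemma mH: "module sH" using BA by (simp add: bialgebra_def kalgebra_def)
lemma kA: "kalgebra sA" using CA by (simp add: comodule_algebra_def)
lemma sA_mult1: "sA r (x * y) = sA r x * y" using kA unfolding kalgebra_def by blast
lemma sA_mult2: "sA r (x * y) = x * sA r y" using kA unfolding kalgebra_def by blast

lemma DC_add: "teq (cmod sC) (cmod sC) (\<Delta>C (x + y)) (\<Delta>C x @ \<Delta>C y)"
  using MC by (simp add: module_coalgebra_def)
lemma DC_smul: "teq (cmod sC) (cmod sC) (\<Delta>C (sC r x)) (map (\<lambda>(p, q). (sC r p, q)) (\<Delta>C x))"
  using MC by (simp add: module_coalgebra_def)
lemma DC_coass: "teq (cmod sC) (tensor (cmod sC) (cmod sC)) (dl \<Delta>C (\<Delta>C x)) (dr \<Delta>C (\<Delta>C x))"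
  using MC by (simp add: module_coalgebra_def)
lemma eC_add: "\<epsilon>C (x + y) = \<epsilon>C x + \<epsilon>C y"
  using MC by (simp add: module_coalgebra_def)
lemma eC_smul: "\<epsilon>C (sC r x) = r * \<epsilon>C x"
  using MC by (simp add: module_coalgebra_def)
lemma DC_cl: "sum_list (map (\<lambda>(p, q). sC (\<epsilon>C p) q) (\<Delta>C x)) = x"
  using MC by (simp add: module_coalgebra_def)
lemma DC_cr: "sum_list (map (\<lambda>(p, q). sC (\<epsilon>C q) p) (\<Delta>C x)) = x"
  using MC by (simp add: module_coalgebra_def)
lemma act_addl: "actC (c + d) h = actC c h + actC d h"
  using MC by (simp add: module_coalgebra_def)
lemma act_addr: "actC c (h + g) = actC c h + actC c g"
  using MC by (simp add: module_coalgebra_def)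
lemma act_smul1: "actC (sC r c) h = sC r (actC c h)"
  using MC by (simp add: module_coalgebra_def)
lemma act_smul2: "actC c (sH r h) = sC r (actC c h)"
  using MC by (simp add: module_coalgebra_def)
lemma act_one: "actC c 1 = c"
  using MC by (simp add: module_coalgebra_def)
lemma act_mult: "actC (actC c h) g = actC c (h * g)"
  using MC by (simp add: module_coalgebra_def)
lemma DC_act: "teq (cmod sC) (cmod sC) (\<Delta>C (actC c h))
              (concat (map (\<lambda>(c1, c2). map (\<lambda>(h1, h2). (actC c1 h1, actC c2 h2)) (\<Delta>H h)) (\<Delta>C c)))"
  using MC by (simp add: module_coalgebra_def)
lemma eC_act: "\<epsilon>C (actC c h) = \<epsilon>C c * \<epsilon>H h"
  using MC by (simp add: module_coalgebra_def)

lemma rA_add: "teq (cmod sH) (cmod sA) (\<rho>A (a + b)) (\<rho>A a @ \<rho>A b)"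
  using CA by (simp add: comodule_algebra_def)
lemma rA_smul: "teq (cmod sH) (cmod sA) (\<rho>A (sA r a)) (map (\<lambda>(h, x). (sH r h, x)) (\<rho>A a))"
  using CA by (simp add: comodule_algebra_def)
lemma rA_coass: "teq (cmod sH) (tensor (cmod sH) (cmod sA)) (dl \<Delta>H (\<rho>A a)) (dr \<rho>A (\<rho>A a))"
  using CA by (simp add: comodule_algebra_def)
lemma rA_counit: "sum_list (map (\<lambda>(h, x). sA (\<epsilon>H h) x) (\<rho>A a)) = a"
  using CA by (simp add: comodule_algebra_def)
lemma rA_mult: "teq (cmod sH) (cmod sA) (\<rho>A (a * b))
              (concat (map (\<lambda>(h, x). map (\<lambda>(h', y). (h * h', x * y)) (\<rho>A b)) (\<rho>A a)))"
  using CA by (simp add: comodule_algebra_def)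
lemma rA_one: "teq (cmod sH) (cmod sA) (\<rho>A 1) [(1, 1)]"
  using CA by (simp add: comodule_algebra_def)

lemma g_addl: "\<gamma> (c + c') d = \<gamma> c d + \<gamma> c' d"
  using integral by (simp add: A_integral_def)
lemma g_smull: "\<gamma> (sC r c) d = sA r (\<gamma> c d)"
  using integral by (simp add: A_integral_def)
lemma g_addr: "\<gamma> c (d + d') = \<gamma> c d + \<gamma> c d'"
  using integral by (simp add: A_integral_def)
lemma g_smulr: "\<gamma> c (sC r d) = sA r (\<gamma> c d)"
  using integral by (simp add: A_integral_def)
lemma g_ii: "teq (cmod sC) (cmod sA)
              (map (\<lambda>(c1, c2). (c1, \<gamma> c2 d)) (\<Delta>C c))
              (concat (map (\<lambda>(d1, d2). map (\<lambda>(h, x). (actC d2 h, x)) (\<rho>A (\<gamma> c d1))) (\<Delta>C d)))"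
  using integral by (simp add: A_integral_def)

lemma g_zerol: "\<gamma> 0 d = 0" using g_addl[of 0 0 d] by simp
lemma g_zeror: "\<gamma> c 0 = 0" using g_addr[of c 0 0] by simp
lemma act_zerol: "actC 0 h = 0" using act_addl[of 0 0 h] by simp
lemma act_zeror: "actC c 0 = 0" using act_addr[of c 0 0] by simp
lemma eC_zero: "\<epsilon>C 0 = 0" using eC_add[of 0 0] by simp

lemma sC0: "sC 0 x = 0" using module.scale_zero_left[OF mC] .
lemma sH0: "sH 0 x = 0" using module.scale_zero_left[OF mH] .
lemma sA0: "sA 0 x = 0" using module.scale_zero_left[OF mA] .

lemma DC_zero: "teq (cmod sC) (cmod sC) (\<Delta>C 0) []"
proof -
  have "teq (cmod sC) (cmod sC) (\<Delta>C (sC 0 0)) (map (\<lambda>(p, q). (sC 0 p, q)) (\<Delta>C 0))" by (rule DC_smul)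
  moreover have "teq (cmod sC) (cmod sC) (map (\<lambda>(p, q). (sC 0 p, q)) (\<Delta>C 0)) []"
    by (simp add: sC0 teq_map_nil teq_zerol_c)
  ultimately show ?thesis by (simp add: sC0 teq_trans)
qed

lemma rA_zero: "teq (cmod sH) (cmod sA) (\<rho>A 0) []"
proof -
  have "teq (cmod sH) (cmod sA) (\<rho>A (sA 0 0)) (map (\<lambda>(h, x). (sH 0 h, x)) (\<rho>A 0))" by (rule rA_smul)
  moreover have "teq (cmod sH) (cmod sA) (map (\<lambda>(h, x). (sH 0 h, x)) (\<rho>A 0)) []"
    by (simp add: sH0 teq_map_nil teq_zerol_c)
  ultimately show ?thesis by (simp add: sA0 teq_trans)
qed

end


lemma teq_addl_c: "teq (cmod s) W [(v + v', w)] [(v, w), (v', w)]"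
  using teq_addl[of "cmod s" W v v' w] by simp
lemma teq_addr_c: "teq V (cmod s) [(v, w + w')] [(v, w), (v, w')]"
  using teq_addr[of V "cmod s" v w w'] by simp
lemma teq_bal_c: "teq (cmod s) (cmod t) [(s r v, w)] [(v, t r w)]"
  using teq_bal[of "cmod s" "cmod t" r v w] by simp

declare teq_trans[trans]

lemma teq_interleave2:
  "teq V W (concat (map (\<lambda>(p, q). f p q @ g p q) L)) (concat (map (\<lambda>(p, q). f p q) L) @ concat (map (\<lambda>(p, q). g p q) L))"
  by (rule teq_perm) (induction L, auto)

lemma map_map_prod:
  "map (\<lambda>(p, q). f p q) (map (\<lambda>(p, q). (g p q, h p q)) L) = map (\<lambda>(p, q). f (g p q) (h p q)) L"
  by (induction L) auto

lemma concat_map_dl: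
  "concat (map (\<lambda>(x, L). F x L) (dl \<Delta> xs)) =
   concat (map (\<lambda>(p, q). concat (map (\<lambda>(p1, p2). F p1 [(p2, q)]) (\<Delta> p))) xs)"
  by (induction xs) (auto simp: dl_def map_map_prod simp del: map_map)

lemma concat_map_dr:
  "concat (map (\<lambda>(x, L). F x L) (dr \<rho> xs)) = concat (map (\<lambda>(p, q). F p (\<rho> q)) xs)"
  by (induction xs) (auto simp: dr_def)

lemma teq_map_pw:
  assumes "\<And>p q. (p, q) \<in> set L \<Longrightarrow> teq V W [f p q] [g p q]"
  shows "teq V W (map (\<lambda>(p, q). f p q) L) (map (\<lambda>(p, q). g p q) L)"
proof -
  have "teq V W (concat (map (\<lambda>(p, q). [f p q]) L)) (concat (map (\<lambda>(p, q). [g p q]) L))"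
    by (rule teq_concat_pw) (use assms in auto)
  then show ?thesis by (simp add: concat_map_single2)
qed

lemma teq_map_split:
  "teq (cmod s) W (map (\<lambda>(p, q). (f p q + f' p q, g p q)) R)
      (map (\<lambda>(p, q). (f p q, g p q)) R @ map (\<lambda>(p, q). (f' p q, g p q)) R)"
proof -
  have "teq (cmod s) W (concat (map (\<lambda>(p, q). [(f p q + f' p q, g p q)]) R))
                (concat (map (\<lambda>x. [(case x of (p, q) \<Rightarrow> (f p q, g p q))] @ [(case x of (p, q) \<Rightarrow> (f' p q, g p q))]) R))"
    by (rule teq_concat_pw) (auto simp: teq_addl_c)
  also have "teq (cmod s) W \<dots> (map (\<lambda>(p, q). (f p q, g p q)) R @ map (\<lambda>(p, q). (f' p q, g p q)) R)"
    using teq_interleave[where f="\<lambda>x. [(case x of (p, q) \<Rightarrow> (f p q, g p q))]" and g="\<lambda>x. [(case x of (p, q) \<Rightarrow> (f' p q, g p q))]" and L=R]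
    by (simp add: concat_map_single)
  finally show ?thesis by (simp add: concat_map_single2)
qed

context DH
begin

lemma map_rho:
  assumes "teq (cmod sH) (cmod sA) P Q"
  shows "teq (cmod sC) (cmod sA) (map (\<lambda>(h, u). (actC z h, a * u)) P) (map (\<lambda>(h, u). (actC z h, a * u)) Q)"
proof -
  have "teq (cmod sC) (cmod sA) (concat (map (\<lambda>(h, u). [(actC z h, a * u)]) P)) (concat (map (\<lambda>(h, u). [(actC z h, a * u)]) Q))"
    by (rule teq_map[OF assms, where g="\<lambda>h u. [(actC z h, a * u)]"])
       (simp_all add: act_addr act_zeror distrib_left teq_addl_c teq_addr_c teq_zerol_c teq_zeror_c
         act_smul2 sA_mult2[symmetric] teq_bal_c teq_refl)
  then show ?thesis by (simp add: concat_map_single2)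
qed

lemma map_leftmult:
  assumes "teq (cmod sC) (cmod sA) P Q"
  shows "teq (cmod sC) (cmod sA) (map (\<lambda>(v, w). (v, a * w)) P) (map (\<lambda>(v, w). (v, a * w)) Q)"
proof -
  have "teq (cmod sC) (cmod sA) (concat (map (\<lambda>(v, w). [(v, a * w)]) P)) (concat (map (\<lambda>(v, w). [(v, a * w)]) Q))"
    by (rule teq_map[OF assms, where g="\<lambda>v w. [(v, a * w)]"])
       (simp_all add: distrib_left teq_addl_c teq_addr_c teq_zerol_c teq_zeror_c
         sA_mult2[symmetric] teq_bal_c teq_refl)
  then show ?thesis by (simp add: concat_map_single2)
qed

definition Th :: "'a \<Rightarrow> 'c \<Rightarrow> ('c \<times> 'c) list \<Rightarrow> ('c \<times> 'a) list" where
  "Th a x L = concat (map (\<lambda>(y, z). map (\<lambda>(h, u). (actC z h, a * u)) (\<rho>A (\<gamma> x y))) L)"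

lemma Th_eqr:
  assumes "teq (cmod sC) (cmod sC) L L'"
  shows "teq (cmod sC) (cmod sA) (Th a x L) (Th a x L')"
  unfolding Th_def
proof (rule teq_map[OF assms, where g="\<lambda>y z. map (\<lambda>(h, u). (actC z h, a * u)) (\<rho>A (\<gamma> x y))"])
  fix v v' w show "teq (cmod sC) (cmod sA) (map (\<lambda>(h, u). (actC w h, a * u)) (\<rho>A (\<gamma> x (m_add (cmod sC) v v'))))
       (map (\<lambda>(h, u). (actC w h, a * u)) (\<rho>A (\<gamma> x v)) @ map (\<lambda>(h, u). (actC w h, a * u)) (\<rho>A (\<gamma> x v')))"
    using map_rho[OF rA_add, of w a "\<gamma> x v" "\<gamma> x v'"] by (simp add: g_addr)
next
  fix v w w' show "teq (cmod sC) (cmod sA) (map (\<lambda>(h, u). (actC (m_add (cmod sC) w w') h, a * u)) (\<rho>A (\<gamma> x v)))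
       (map (\<lambda>(h, u). (actC w h, a * u)) (\<rho>A (\<gamma> x v)) @ map (\<lambda>(h, u). (actC w' h, a * u)) (\<rho>A (\<gamma> x v)))"
    by (simp add: act_addl teq_map_split)
next
  fix w show "teq (cmod sC) (cmod sA) (map (\<lambda>(h, u). (actC w h, a * u)) (\<rho>A (\<gamma> x (m_zero (cmod sC))))) []"
    using map_rho[OF rA_zero, of w a] by (simp add: g_zeror)
next
  fix v show "teq (cmod sC) (cmod sA) (map (\<lambda>(h, u). (actC (m_zero (cmod sC)) h, a * u)) (\<rho>A (\<gamma> x v))) []"
    by (simp add: act_zerol teq_map_nil teq_zerol_c)
next
  fix r v w show "teq (cmod sC) (cmod sA) (map (\<lambda>(h, u). (actC w h, a * u)) (\<rho>A (\<gamma> x (m_smul (cmod sC) r v))))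
          (map (\<lambda>(h, u). (actC (m_smul (cmod sC) r w) h, a * u)) (\<rho>A (\<gamma> x v)))"
    using map_rho[OF rA_smul, of w a r "\<gamma> x v"] by (simp add: g_smulr act_smul1 act_smul2 map_map_prod del: map_map)
qed (simp_all add: teq_refl)

lemma Th_addl: "teq (cmod sC) (cmod sA) (Th a (x + x') L) (Th a x L @ Th a x' L)"
proof -
  have "teq (cmod sC) (cmod sA) (Th a (x + x') L)
     (concat (map (\<lambda>(y, z). map (\<lambda>(h, u). (actC z h, a * u)) (\<rho>A (\<gamma> x y)) @ map (\<lambda>(h, u). (actC z h, a * u)) (\<rho>A (\<gamma> x' y))) L))"
    unfolding Th_def
    by (rule teq_concat_pw) (auto simp: g_addl intro!: map_rho[OF rA_add, simplified])
  also have "teq (cmod sC) (cmod sA) \<dots> (Th a x L @ Th a x' L)"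
    unfolding Th_def
    by (rule teq_interleave2)
  finally show ?thesis .
qed

lemma Th_zerol: "teq (cmod sC) (cmod sA) (Th a 0 L) []"
  unfolding Th_def
  by (rule teq_concat_nil) (auto simp: g_zerol intro!: map_rho[OF rA_zero, simplified])

lemma Th_coass: "teq (cmod sC) (cmod sA)
   (concat (map (\<lambda>(x, L). Th a x L) (dl \<Delta>C (\<Delta>C c))))
   (concat (map (\<lambda>(x, L). Th a x L) (dr \<Delta>C (\<Delta>C c))))"
  by (rule teq_map[OF DC_coass, where g="Th a"])
     (simp_all add: teq_refl Th_eqr Th_addl Th_zerol, simp_all add: Th_def g_smull g_smulr teq_refl map_map_prod del: map_map)

definition Gam :: "('c \<times> 'c) list \<Rightarrow> 'a" where
  "Gam L = sum_list (map (\<lambda>(y, z). \<gamma> y z) L)"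

lemma Gam_teq: assumes "teq (cmod sC) (cmod sC) L L'" shows "Gam L = Gam L'"
  unfolding Gam_def
  by (rule teq_sum[OF assms, where f=\<gamma>]) (simp_all add: g_addl g_addr g_zerol g_zeror g_smull g_smulr)

lemma Gam_append: "Gam (L @ L') = Gam L + Gam L'"
  by (simp add: Gam_def)

lemma Gam_smul: "Gam (map (\<lambda>(v, w). (sC r v, w)) L) = sA r (Gam L)"
  unfolding Gam_def
  by (induction L) (auto simp: g_smull module.scale_right_distrib[OF mA] module.scale_zero_right[OF mA])

definition Xi :: "'a \<Rightarrow> 'c \<Rightarrow> ('c \<times> 'c) list \<Rightarrow> ('c \<times> 'a) list" where
  "Xi a x L = [(x, a * Gam L)]"

lemma Xi_coass: "teq (cmod sC) (cmod sA)
   (concat (map (\<lambda>(x, L). Xi a x L) (dl \<Delta>C (\<Delta>C c))))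
   (concat (map (\<lambda>(x, L). Xi a x L) (dr \<Delta>C (\<Delta>C c))))"
  by (rule teq_map[OF DC_coass, where g="Xi a"])
     (simp_all add: Xi_def teq_refl Gam_teq teq_addl_c Gam_append distrib_left teq_addr_c teq_zerol_c
        teq_zeror_c Gam_smul sA_mult2[symmetric] teq_bal_c, simp add: Gam_def teq_zeror_c)

lemma map_leftmult_eq:
  "map (\<lambda>(v, w). (v, a * w)) (concat (map (\<lambda>(y, z). map (\<lambda>(h, x). (F z h, x)) (R y)) L)) =
   concat (map (\<lambda>(y, z). map (\<lambda>(h, u). (F z h, a * u)) (R y)) L)"
  by (induction L) (auto simp: map_map_prod simp del: map_map)

lemma Th_ii: "teq (cmod sC) (cmod sA) (Th a p (\<Delta>C q)) (map (\<lambda>(p1, p2). (p1, a * \<gamma> p2 q)) (\<Delta>C p))"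
  using teq_sym[OF map_leftmult[OF g_ii[of q p], of a]]
  by (simp add: map_leftmult_eq Th_def map_map_prod del: map_map)

lemma tot_imp_2:
  assumes tot: "total_integral sA \<Delta>C \<epsilon>C \<gamma>"
  shows "teq (cmod sC) (cmod sA)
          (concat (map (\<lambda>(c12, c3). concat (map (\<lambda>(c1, c2).
              map (\<lambda>(h, x). (actC c3 h, a * x)) (\<rho>A (\<gamma> c1 c2))) (\<Delta>C c12))) (\<Delta>C c)))
          [(c, a)]"
proof -
  have "concat (map (\<lambda>(c12, c3). concat (map (\<lambda>(c1, c2).
              map (\<lambda>(h, x). (actC c3 h, a * x)) (\<rho>A (\<gamma> c1 c2))) (\<Delta>C c12))) (\<Delta>C c))
     = concat (map (\<lambda>(x, L). Th a x L) (dl \<Delta>C (\<Delta>C c)))"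
    by (simp add: concat_map_dl Th_def)
  also have "teq (cmod sC) (cmod sA) \<dots> (concat (map (\<lambda>(x, L). Th a x L) (dr \<Delta>C (\<Delta>C c))))"
    by (rule Th_coass)
  also have "\<dots> = concat (map (\<lambda>(p, q). Th a p (\<Delta>C q)) (\<Delta>C c))"
    by (simp add: concat_map_dr)
  also have "teq (cmod sC) (cmod sA) \<dots> (concat (map (\<lambda>(p, q). map (\<lambda>(p1, p2). (p1, a * \<gamma> p2 q)) (\<Delta>C p)) (\<Delta>C c)))"
    by (rule teq_concat_pw) (auto simp: Th_ii)
  also have "\<dots> = concat (map (\<lambda>(x, L). Xi a x L) (dl \<Delta>C (\<Delta>C c)))"
    by (simp only: concat_map_dl) (simp add: Xi_def Gam_def concat_map_single2)
  also have "teq (cmod sC) (cmod sA) \<dots> (concat (map (\<lambda>(x, L). Xi a x L) (dr \<Delta>C (\<Delta>C c))))"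
    by (rule Xi_coass)
  also have "\<dots> = map (\<lambda>(p, q). (p, sA (\<epsilon>C q) a)) (\<Delta>C c)"
    using tot by (simp only: concat_map_dr) (simp add: Xi_def Gam_def total_integral_def concat_map_single2 sA_mult2[symmetric])
  also have "teq (cmod sC) (cmod sA) \<dots> (map (\<lambda>(p, q). (sC (\<epsilon>C q) p, a)) (\<Delta>C c))"
    by (rule teq_map_pw) (rule teq_sym[OF teq_bal_c])
  also have "\<dots> = map (\<lambda>x. (x, a)) (map (\<lambda>(p, q). sC (\<epsilon>C q) p) (\<Delta>C c))"
    by (simp add: case_prod_beta)
  also have "teq (cmod sC) (cmod sA) \<dots> [(c, a)]"
    using teq_sym[OF teq_sum_left[where s=sC and xs="map (\<lambda>(p, q). sC (\<epsilon>C q) p) (\<Delta>C c)" and W="cmod sA" and w=a]]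
    by (simp add: DC_cr)
  finally show ?thesis .
qed

end


lemma sum_concat2:
  "sum_list (map f (concat (map (\<lambda>(p, q). G p q) L))) = sum_list (map (\<lambda>(p, q). sum_list (map f (G p q))) L)"
  by (induction L) auto

context DH
begin

lemma E_teq:
  assumes "teq (cmod sC) (cmod sA) P Q"
  shows "sum_list (map (\<lambda>(v, w). sA (\<epsilon>C v) w) P) = sum_list (map (\<lambda>(v, w). sA (\<epsilon>C v) w) Q)"
  by (rule teq_sum[OF assms, where f="\<lambda>v w. sA (\<epsilon>C v) w"])
     (simp_all add: eC_add eC_zero eC_smul module.scale_left_distrib[OF mA] module.scale_right_distrib[OF mA]
       module.scale_scale[OF mA] module.scale_zero_left[OF mA] module.scale_zero_right[OF mA] mult.commute)

lemma E_rho_gen: "sum_list (map (\<lambda>(h, x). sA (\<epsilon>C (actC z h)) (a * x)) R) =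
    sA (\<epsilon>C z) (a * sum_list (map (\<lambda>(h, x). sA (\<epsilon>H h) x) R))"
  by (induction R) (auto simp: eC_act distrib_left module.scale_right_distrib[OF mA]
      module.scale_zero_right[OF mA] sA_mult2[symmetric] module.scale_scale[OF mA])

lemma E_rho: "sum_list (map (\<lambda>(h, x). sA (\<epsilon>C (actC z h)) (a * x)) (\<rho>A b)) = sA (\<epsilon>C z) (a * b)"
  using E_rho_gen[of z a "\<rho>A b"] by (simp add: rA_counit)

lemma E_rho1: "sum_list (map (\<lambda>(h, x). sA (\<epsilon>C (actC z h)) x) (\<rho>A b)) = sA (\<epsilon>C z) b"
  using E_rho[of z 1 b] by simp

lemma sA_sum_prod: "sum_list (map (\<lambda>(p, q). sA r (f p q)) L) = sA r (sum_list (map (\<lambda>(p, q). f p q) L))"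
  by (induction L) (auto simp: module.scale_right_distrib[OF mA] module.scale_zero_right[OF mA])

lemma GamD_add: "Gam (\<Delta>C (x + y)) = Gam (\<Delta>C x) + Gam (\<Delta>C y)"
  by (simp add: Gam_teq[OF DC_add] Gam_append)

lemma GamD_smul: "Gam (\<Delta>C (sC r x)) = sA r (Gam (\<Delta>C x))"
  by (simp add: Gam_teq[OF DC_smul] Gam_smul)

lemma GamD_zero: "Gam (\<Delta>C 0) = 0"
  using Gam_teq[OF DC_zero] by (simp add: Gam_def)

lemma GamD_sum_prod: "Gam (\<Delta>C (sum_list (map (\<lambda>(p, q). f p q) L))) = sum_list (map (\<lambda>(p, q). Gam (\<Delta>C (f p q))) L)"
  by (induction L) (auto simp: GamD_zero GamD_add)

lemma Gam_total: "Gam (\<Delta>C c) = sum_list (map (\<lambda>(p, q). sA (\<epsilon>C q) (Gam (\<Delta>C p))) (\<Delta>C c))"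
proof -
  have "Gam (\<Delta>C c) = Gam (\<Delta>C (sum_list (map (\<lambda>(p, q). sC (\<epsilon>C q) p) (\<Delta>C c))))"
    by (simp add: DC_cr)
  also have "\<dots> = sum_list (map (\<lambda>(p, q). sA (\<epsilon>C q) (Gam (\<Delta>C p))) (\<Delta>C c))"
    by (simp add: GamD_sum_prod GamD_smul)
  finally show ?thesis .
qed

lemma E_inner: "sum_list (map (\<lambda>(v, w). sA (\<epsilon>C v) w) (concat (map (\<lambda>(c1, c2). map (\<lambda>(h, x). (actC z h, x)) (\<rho>A (\<gamma> c1 c2))) M)))
  = sA (\<epsilon>C z) (Gam M)"
  by (induction M) (auto simp: map_map_prod E_rho1 Gam_def module.scale_right_distrib[OF mA] module.scale_zero_right[OF mA] simp del: map_map)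

lemma E_big: "sum_list (map (\<lambda>(v, w). sA (\<epsilon>C v) w) (concat (map (\<lambda>(c12, c3). concat (map (\<lambda>(c1, c2). map (\<lambda>(h, x). (actC c3 h, x)) (\<rho>A (\<gamma> c1 c2))) (\<Delta>C c12))) L)))
  = sum_list (map (\<lambda>(p, q). sA (\<epsilon>C q) (Gam (\<Delta>C p))) L)"
  by (induction L) (auto simp: E_inner)

lemma two_imp_tot:
  assumes H: "\<forall>c a. teq (cmod sC) (cmod sA)
          (concat (map (\<lambda>(c12, c3). concat (map (\<lambda>(c1, c2).
              map (\<lambda>(h, x). (actC c3 h, a * x)) (\<rho>A (\<gamma> c1 c2))) (\<Delta>C c12))) (\<Delta>C c)))
          [(c, a)]"
  shows "total_integral sA \<Delta>C \<epsilon>C \<gamma>"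
  unfolding total_integral_def
proof
  fix c
  have t: "teq (cmod sC) (cmod sA)
          (concat (map (\<lambda>(c12, c3). concat (map (\<lambda>(c1, c2).
              map (\<lambda>(h, x). (actC c3 h, x)) (\<rho>A (\<gamma> c1 c2))) (\<Delta>C c12))) (\<Delta>C c)))
          [(c, 1)]"
  proof -
    have "teq (cmod sC) (cmod sA)
          (concat (map (\<lambda>(c12, c3). concat (map (\<lambda>(c1, c2).
              map (\<lambda>(h, x). (actC c3 h, 1 * x)) (\<rho>A (\<gamma> c1 c2))) (\<Delta>C c12))) (\<Delta>C c)))
          [(c, 1)]" using H by blast
    then show ?thesis by simp
  qed
  have "sA (\<epsilon>C c) 1 = sum_list (map (\<lambda>(v, w). sA (\<epsilon>C v) w) [(c, 1)])" by simp
  also have "\<dots> = sum_list (map (\<lambda>(v, w). sA (\<epsilon>C v) w) (concat (map (\<lambda>(c12, c3). concat (map (\<lambda>(c1, c2).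
              map (\<lambda>(h, x). (actC c3 h, x)) (\<rho>A (\<gamma> c1 c2))) (\<Delta>C c12))) (\<Delta>C c))))"
    using E_teq[OF t] by simp
  also have "\<dots> = sum_list (map (\<lambda>(p, q). sA (\<epsilon>C q) (Gam (\<Delta>C p))) (\<Delta>C c))"
    by (rule E_big)
  also have "\<dots> = Gam (\<Delta>C c)" by (rule Gam_total[symmetric])
  finally show "sum_list (map (\<lambda>(c1, c2). \<gamma> c1 c2) (\<Delta>C c)) = sA (\<epsilon>C c) 1"
    by (simp add: Gam_def)
qed

end


lemma sk_double:
  assumes M: "setoid_kmod M" and h: "m_eq M z (m_add M z z)"
  shows "m_eq M z (m_zero M)"
proof -
  note [trans] = sk_trans[OF M]
  have "m_eq M (m_zero M) (m_add M (m_neg M z) z)" by (rule sk_sym[OF M sk_negl[OF M]])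
  also have "m_eq M (m_add M (m_neg M z) z) (m_add M (m_neg M z) (m_add M z z))"
    by (rule sk_add[OF M sk_refl[OF M] h])
  also have "m_eq M (m_add M (m_neg M z) (m_add M z z)) (m_add M (m_add M (m_neg M z) z) z)"
    by (rule sk_sym[OF M sk_assoc[OF M]])
  also have "m_eq M (m_add M (m_add M (m_neg M z) z) z) (m_add M (m_zero M) z)"
    by (rule sk_add[OF M sk_negl[OF M] sk_refl[OF M]])
  also have "m_eq M (m_add M (m_zero M) z) z" by (rule sk_zero[OF M])
  finally show ?thesis using sk_sym[OF M] by blast
qed

lemma sk_swap4:
  assumes M: "setoid_kmod M"
  shows "m_eq M (m_add M (m_add M a b) (m_add M c d)) (m_add M (m_add M a c) (m_add M b d))"
proof -
  note [trans] = sk_trans[OF M]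
  have "m_eq M (m_add M (m_add M a b) (m_add M c d)) (m_add M a (m_add M b (m_add M c d)))"
    by (rule sk_assoc[OF M])
  also have "m_eq M \<dots> (m_add M a (m_add M (m_add M b c) d))"
    by (rule sk_add[OF M sk_refl[OF M] sk_sym[OF M sk_assoc[OF M]]])
  also have "m_eq M \<dots> (m_add M a (m_add M (m_add M c b) d))"
    by (rule sk_add[OF M sk_refl[OF M] sk_add[OF M sk_comm[OF M] sk_refl[OF M]]])
  also have "m_eq M \<dots> (m_add M a (m_add M c (m_add M b d)))"
    by (rule sk_add[OF M sk_refl[OF M] sk_assoc[OF M]])
  also have "m_eq M \<dots> (m_add M (m_add M a c) (m_add M b d))"
    by (rule sk_sym[OF M sk_assoc[OF M]])
  finally show ?thesis .
qed

lemma msum_cong2: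
  assumes M: "setoid_kmod M" and "\<And>p q. (p, q) \<in> set L \<Longrightarrow> m_eq M (f p q) (g p q)"
  shows "m_eq M (msum M (map (\<lambda>(p, q). f p q) L)) (msum M (map (\<lambda>(p, q). g p q) L))"
  using assms(2)
proof (induction L)
  case Nil then show ?case by (simp add: sk_refl[OF M])
next
  case (Cons a L) then show ?case
    by (cases a) (simp add: msum_def sk_add[OF M])
qed

lemma msum_zeros2:
  assumes M: "setoid_kmod M" and "\<And>p q. (p, q) \<in> set L \<Longrightarrow> m_eq M (f p q) (m_zero M)"
  shows "m_eq M (msum M (map (\<lambda>(p, q). f p q) L)) (m_zero M)"
  using assms(2)
proof (induction L)
  case Nil then show ?case by (simp add: msum_def sk_refl[OF M])
next
  case (Cons a L)
  obtain p q where a: "a = (p, q)" by (cases a)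
  have h1: "m_eq M (f p q) (m_zero M)" using Cons.prems a by simp
  have h2: "m_eq M (msum M (map (\<lambda>(p, q). f p q) L)) (m_zero M)" using Cons.IH Cons.prems by simp
  show ?case unfolding a using sk_trans[OF M sk_add[OF M h1 h2[unfolded msum_def]] sk_zero[OF M]]
    by (simp add: msum_def)
qed

lemma msum_add2:
  assumes M: "setoid_kmod M"
  shows "m_eq M (msum M (map (\<lambda>(p, q). m_add M (f p q) (g p q)) L))
           (m_add M (msum M (map (\<lambda>(p, q). f p q) L)) (msum M (map (\<lambda>(p, q). g p q) L)))"
proof (induction L)
  case Nil then show ?case by (simp add: msum_def sk_sym[OF M sk_zero[OF M]])
next
  case (Cons a L)
  obtain p q where a: "a = (p, q)" by (cases a)
  show ?case unfolding a msum_def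
    using sk_trans[OF M sk_add[OF M sk_refl[OF M] Cons.IH[unfolded msum_def]] sk_swap4[OF M]] by simp
qed

lemma msum_concat2:
  assumes M: "setoid_kmod M"
  shows "m_eq M (msum M (concat (map (\<lambda>(p, q). G p q) L))) (msum M (map (\<lambda>(p, q). msum M (G p q)) L))"
proof (induction L)
  case Nil then show ?case by (simp add: msum_def sk_refl[OF M])
next
  case (Cons a L)
  obtain p q where a: "a = (p, q)" by (cases a)
  show ?case unfolding a
    using sk_trans[OF M msum_append[OF M] sk_add[OF M sk_refl[OF M] Cons.IH]] by (simp add: msum_def)
qed

lemma msum_dl:
  assumes M: "setoid_kmod M"
  shows "m_eq M (msum M (map (\<lambda>(x, L). F x L) (dl \<Delta> xs)))
                (msum M (map (\<lambda>(p, q). msum M (map (\<lambda>(p1, p2). F p1 [(p2, q)]) (\<Delta> p))) xs))"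
proof (induction xs)
  case Nil then show ?case by (simp add: msum_def dl_def sk_refl[OF M])
next
  case (Cons a xs)
  obtain p q where a: "a = (p, q)" by (cases a)
  have "dl \<Delta> (a # xs) = map (\<lambda>(p1, p2). (p1, [(p2, q)])) (\<Delta> p) @ dl \<Delta> xs"
    by (simp add: a dl_def)
  then show ?case unfolding a
    using sk_trans[OF M msum_append[OF M] sk_add[OF M sk_refl[OF M] Cons.IH]]
    by (simp add: msum_def map_map_prod a del: map_map)
qed

context DH
begin

context
  fixes M :: "('m, 'k) kmod" and actM and \<rho>M
  assumes DM: "doi_hopf_module sH sA \<rho>A sC \<Delta>C \<epsilon>C actC M actM \<rho>M"
begin

lemma SM: "setoid_kmod M" using DM by (simp add: doi_hopf_module_def)
lemma aM_cong: "m_eq M m m' \<Longrightarrow> m_eq M (actM m a) (actM m' a)" using DM by (simp add: doi_hopf_module_def)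
lemma aM_addl: "m_eq M (actM (m_add M m m') a) (m_add M (actM m a) (actM m' a))" using DM by (simp add: doi_hopf_module_def)
lemma aM_addr: "m_eq M (actM m (a + b)) (m_add M (actM m a) (actM m b))" using DM by (simp add: doi_hopf_module_def)
lemma aM_smul1: "m_eq M (actM (m_smul M r m) a) (m_smul M r (actM m a))" using DM by (simp add: doi_hopf_module_def)
lemma aM_smul2: "m_eq M (actM m (sA r a)) (m_smul M r (actM m a))" using DM by (simp add: doi_hopf_module_def)
lemma aM_one: "m_eq M (actM m 1) m" using DM by (simp add: doi_hopf_module_def)
lemma rM_coass: "teq (cmod sC) (tensor (cmod sC) M) (dl \<Delta>C (\<rho>M m)) (dr \<rho>M (\<rho>M m))"
  using DM by (simp add: doi_hopf_module_def)
lemma rM_counit: "m_eq M (msum M (map (\<lambda>(c, x). m_smul M (\<epsilon>C c) x) (\<rho>M m))) m"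
  using DM by (simp add: doi_hopf_module_def)

lemma aM_zero_r: "m_eq M (actM x 0) (m_zero M)"
  using sk_double[OF SM, of "actM x 0"] aM_addr[of x 0 0] by simp

lemma aM_zero_l: "m_eq M (actM (m_zero M) a) (m_zero M)"
proof (rule sk_double[OF SM])
  have "m_eq M (actM (m_zero M) a) (actM (m_add M (m_zero M) (m_zero M)) a)"
    by (rule aM_cong[OF sk_sym[OF SM sk_zero[OF SM]]])
  then show "m_eq M (actM (m_zero M) a) (m_add M (actM (m_zero M) a) (actM (m_zero M) a))"
    using sk_trans[OF SM _ aM_addl] by blast
qed

lemma actM_sum2: "m_eq M (msum M (map (\<lambda>(p, q). actM x (g p q)) L)) (actM x (sum_list (map (\<lambda>(p, q). g p q) L)))"
proof (induction L)
  case Nil then show ?case by (simp add: msum_def sk_sym[OF SM aM_zero_r])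
next
  case (Cons a L)
  obtain p q where a: "a = (p, q)" by (cases a)
  show ?case unfolding a
    using sk_trans[OF SM sk_add[OF SM sk_refl[OF SM] Cons.IH[unfolded msum_def]] sk_sym[OF SM aM_addr]]
    by (simp add: msum_def)
qed

definition FM :: "'c \<Rightarrow> ('c \<times> 'm) list \<Rightarrow> 'm" where
  "FM c L = msum M (map (\<lambda>(d, x). actM x (\<gamma> c d)) L)"

lemma FM_eqr:
  assumes "teq (cmod sC) M L L'"
  shows "m_eq M (FM v L) (FM v L')"
  unfolding FM_def
proof (rule teq_msum[OF SM assms, where f="\<lambda>d x. actM x (\<gamma> v d)"])
  fix r d x
  show "m_eq M (actM x (\<gamma> v (m_smul (cmod sC) r d))) (actM (m_smul M r x) (\<gamma> v d))"
    using sk_trans[OF SM aM_smul2 sk_sym[OF SM aM_smul1]] by (simp add: g_smulr)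
qed (simp_all add: sk_refl[OF SM] aM_cong g_addr aM_addr aM_addl g_zeror aM_zero_r aM_zero_l)

lemma FM_coass: "m_eq M (msum M (map (\<lambda>(x, L). FM x L) (dl \<Delta>C (\<rho>M m))))
                        (msum M (map (\<lambda>(x, L). FM x L) (dr \<rho>M (\<rho>M m))))"
proof (rule teq_msum[OF SM rM_coass, where f=FM])
  fix v v' w
  have "m_eq M (FM (v + v') w) (msum M (map (\<lambda>(d, x). m_add M (actM x (\<gamma> v d)) (actM x (\<gamma> v' d))) w))"
    unfolding FM_def g_addl by (rule msum_cong2[OF SM aM_addr])
  then show "m_eq M (FM (m_add (cmod sC) v v') w) (m_add M (FM v w) (FM v' w))"
    using sk_trans[OF SM _ msum_add2[OF SM]] by (simp add: FM_def)
next
  fix v w w' show "m_eq M (FM v (m_add (tensor (cmod sC) M) w w')) (m_add M (FM v w) (FM v w'))"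
    by (simp add: FM_def msum_append[OF SM])
next
  fix w show "m_eq M (FM (m_zero (cmod sC)) w) (m_zero M)"
    unfolding FM_def by (simp add: g_zerol msum_zeros2[OF SM aM_zero_r])
next
  fix v show "m_eq M (FM v (m_zero (tensor (cmod sC) M))) (m_zero M)"
    by (simp add: FM_def msum_def sk_refl[OF SM])
next
  fix r v w show "m_eq M (FM (m_smul (cmod sC) r v) w) (FM v (m_smul (tensor (cmod sC) M) r w))"
    by (simp add: FM_def g_smull g_smulr map_map_prod sk_refl[OF SM] del: map_map)
qed (simp_all add: sk_refl[OF SM] FM_eqr)

lemma tot_imp_norm:
  assumes tot: "total_integral sA \<Delta>C \<epsilon>C \<gamma>"
  shows "integral_normalizes M actM \<rho>M \<gamma>"
  unfolding integral_normalizes_def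
proof
  fix m
  note [trans] = sk_trans[OF SM]
  have "m_eq M (msum M (concat (map (\<lambda>(c, y). map (\<lambda>(d, x). actM x (\<gamma> c d)) (\<rho>M y)) (\<rho>M m))))
                (msum M (map (\<lambda>(c, y). FM c (\<rho>M y)) (\<rho>M m)))"
    unfolding FM_def by (rule msum_concat2[OF SM])
  also have "msum M (map (\<lambda>(c, y). FM c (\<rho>M y)) (\<rho>M m)) = msum M (map (\<lambda>(x, L). FM x L) (dr \<rho>M (\<rho>M m)))"
    by (simp add: dr_def map_map_prod del: map_map)
  also have "m_eq M \<dots> (msum M (map (\<lambda>(x, L). FM x L) (dl \<Delta>C (\<rho>M m))))"
    by (rule sk_sym[OF SM FM_coass])
  also have "m_eq M \<dots> (msum M (map (\<lambda>(p, q). msum M (map (\<lambda>(p1, p2). FM p1 [(p2, q)]) (\<Delta>C p))) (\<rho>M m)))"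
    by (rule msum_dl[OF SM])
  also have "m_eq M \<dots> (msum M (map (\<lambda>(p, q). m_smul M (\<epsilon>C p) q) (\<rho>M m)))"
  proof (rule msum_cong2[OF SM])
    fix p q
    have "m_eq M (msum M (map (\<lambda>(p1, p2). FM p1 [(p2, q)]) (\<Delta>C p)))
                 (msum M (map (\<lambda>(p1, p2). actM q (\<gamma> p1 p2)) (\<Delta>C p)))"
      by (rule msum_cong2[OF SM]) (simp add: FM_def msum_single[OF SM])
    also have "m_eq M \<dots> (actM q (sum_list (map (\<lambda>(p1, p2). \<gamma> p1 p2) (\<Delta>C p))))"
      by (rule actM_sum2)
    also have "\<dots> = actM q (sA (\<epsilon>C p) 1)" using tot by (simp add: total_integral_def)
    also have "m_eq M \<dots> (m_smul M (\<epsilon>C p) (actM q 1))" by (rule aM_smul2)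
    also have "m_eq M \<dots> (m_smul M (\<epsilon>C p) q)" by (rule sk_smul[OF SM aM_one])
    finally show "m_eq M (msum M (map (\<lambda>(p1, p2). FM p1 [(p2, q)]) (\<Delta>C p))) (m_smul M (\<epsilon>C p) q)" .
  qed
  also have "m_eq M \<dots> m" by (rule rM_counit)
  finally show "m_eq M (msum M (concat (map (\<lambda>(c, y). map (\<lambda>(d, x). actM x (\<gamma> c d)) (\<rho>M y)) (\<rho>M m)))) m" .
qed

end

end


lemma teq_bal_g: "teq (cmod s) W [(s r v, w)] [(v, m_smul W r w)]"
  using teq_bal[of "cmod s" W r v w] by simp

lemma teq_map_split_r:
  "teq V (cmod s) (map (\<lambda>(p, q). (g p q, f p q + f' p q)) R)
      (map (\<lambda>(p, q). (g p q, f p q)) R @ map (\<lambda>(p, q). (g p q, f' p q)) R)"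
proof -
  have "teq V (cmod s) (concat (map (\<lambda>(p, q). [(g p q, f p q + f' p q)]) R))
                (concat (map (\<lambda>(p, q). [(g p q, f p q)] @ [(g p q, f' p q)]) R))"
    by (rule teq_concat_pw) (auto simp: teq_addr_c)
  also have "teq V (cmod s) \<dots> (concat (map (\<lambda>(p, q). [(g p q, f p q)]) R) @ concat (map (\<lambda>(p, q). [(g p q, f' p q)]) R))"
    by (rule teq_interleave2)
  finally show ?thesis by (simp add: concat_map_single2)
qed

lemma msum_tensor: "msum (tensor V W) xs = concat xs"
  by (induction xs) (auto simp: msum_def)

lemma setoid_tensor:
  assumes ms: "module s"
  shows "setoid_kmod (tensor (cmod s) W)"
proof -
  let ?T = "tensor (cmod s) W"
  have neg: "teq (cmod s) W (map (\<lambda>(v, w). (- v, w)) xs) (map (\<lambda>(v, w). (- v, w)) xs')"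
    if "teq (cmod s) W xs xs'" for xs xs'
  proof -
    have nl: "teq (cmod s) W [(- v - v', w)] [(- v, w), (- v', w)]" for v v' w
      using teq_addl_c[where s=s and v="- v" and v'="- v'" and W=W and w=w] by simp
    have "teq (cmod s) W (concat (map (\<lambda>(v, w). [(- v, w)]) xs)) (concat (map (\<lambda>(v, w). [(- v, w)]) xs'))"
      by (rule teq_map[OF that, where g="\<lambda>v w. [(- v, w)]"])
         (simp_all add: nl teq_refl teq_eqr teq_addl_c teq_addr teq_zerol_c teq_zeror
           module.scale_minus_right[OF ms, symmetric] teq_bal_g)
    then show ?thesis by (simp add: concat_map_single2)
  qed
  have smul: "teq (cmod s) W (map (\<lambda>(v, w). (s r v, w)) xs) (map (\<lambda>(v, w). (s r v, w)) xs')"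
    if "teq (cmod s) W xs xs'" for xs xs' r
  proof -
    have sc: "s r (s r' v) = s r' (s r v)" for r' v
      by (simp add: module.scale_scale[OF ms] mult.commute)
    have "teq (cmod s) W (concat (map (\<lambda>(v, w). [(s r v, w)]) xs)) (concat (map (\<lambda>(v, w). [(s r v, w)]) xs'))"
      by (rule teq_map[OF that, where g="\<lambda>v w. [(s r v, w)]"])
         (simp_all add: teq_refl teq_eqr teq_addl_c teq_addr teq_zerol_c teq_zeror
           module.scale_right_distrib[OF ms] module.scale_zero_right[OF ms] sc teq_bal_g)
    then show ?thesis by (simp add: concat_map_single2)
  qed
  have negl: "teq (cmod s) W (map (\<lambda>(v, w). (- v, w)) xs @ xs) []" for xs
  proof -
    have "teq (cmod s) W (map (\<lambda>(v, w). (- v, w)) xs @ xs) (concat (map (\<lambda>(v, w). [(- v, w), (v, w)]) xs))"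
      by (rule teq_perm) (induction xs, auto)
    also have "teq (cmod s) W \<dots> []"
    proof (rule teq_concat_nil)
      fix x assume "x \<in> set xs"
      obtain v w where x: "x = (v, w)" by (cases x)
      have "teq (cmod s) W [(- v, w), (v, w)] [(- v + v, w)]" by (rule teq_sym[OF teq_addl_c])
      also have "teq (cmod s) W [(- v + v, w)] []" using teq_zerol_c[of s W w] by simp
      finally show "teq (cmod s) W (case x of (v, w) \<Rightarrow> [(- v, w), (v, w)]) []" by (simp add: x)
    qed
    finally show ?thesis .
  qed
  have sdistl: "teq (cmod s) W (map (\<lambda>(v, w). (s (r + r') v, w)) xs)
     (map (\<lambda>(v, w). (s r v, w)) xs @ map (\<lambda>(v, w). (s r' v, w)) xs)" for r r' xs
    by (simp add: module.scale_left_distrib[OF ms] teq_map_split)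
  show ?thesis
    unfolding setoid_kmod_def
    apply (intro conjI)
    subgoal by (simp add: reflp_def teq_refl)
    subgoal by (simp add: symp_def teq_sym)
    subgoal by (auto simp: transp_def intro: teq_trans)
    subgoal by (simp add: teq_app)
    subgoal by (simp add: neg)
    subgoal by (simp add: smul)
    subgoal by (simp add: teq_refl)
    subgoal by (simp add: teq_comm)
    subgoal by (simp add: teq_refl)
    subgoal by (simp add: negl)
    subgoal by (simp add: teq_refl)
    subgoal by (simp add: sdistl)
    subgoal by (simp add: map_map_prod module.scale_scale[OF ms] teq_refl del: map_map)
    subgoal by (simp add: module.scale_one[OF ms] teq_refl)
    done
qed


context DH
begin

definition actCA :: "('c \<times> 'a) list \<Rightarrow> 'a \<Rightarrow> ('c \<times> 'a) list" where
  "actCA m b = concat (map (\<lambda>(c, a). map (\<lambda>(h, x). (actC c h, a * x)) (\<rho>A b)) m)"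

lemma map_DC:
  assumes "teq (cmod sC) (cmod sC) P Q"
  shows "teq (cmod sC) (tensor (cmod sC) (cmod sA)) (map (\<lambda>(c1, c2). (c1, [(c2, x0)])) P) (map (\<lambda>(c1, c2). (c1, [(c2, x0)])) Q)"
proof -
  have ar: "teq (cmod sC) (tensor (cmod sC) (cmod sA)) [(c1, [(c2 + c2', x0)])] [(c1, [(c2, x0)]), (c1, [(c2', x0)])]"
    for c1 c2 c2'
  proof -
    have "teq (cmod sC) (tensor (cmod sC) (cmod sA)) [(c1, [(c2 + c2', x0)])] [(c1, [(c2, x0)] @ [(c2', x0)])]"
      using teq_eqr[where V="cmod sC" and W="tensor (cmod sC) (cmod sA)" and w="[(c2 + c2', x0)]" and w'="[(c2, x0)] @ [(c2', x0)]" and v=c1]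
      by (simp add: teq_addl_c)
    also have "teq (cmod sC) (tensor (cmod sC) (cmod sA)) \<dots> [(c1, [(c2, x0)]), (c1, [(c2', x0)])]"
      using teq_addr[of "cmod sC" "tensor (cmod sC) (cmod sA)" c1 "[(c2, x0)]" "[(c2', x0)]"] by simp
    finally show ?thesis .
  qed
  have zr: "teq (cmod sC) (tensor (cmod sC) (cmod sA)) [(c1, [(0, x0)])] []" for c1
  proof -
    have "teq (cmod sC) (tensor (cmod sC) (cmod sA)) [(c1, [(0, x0)])] [(c1, [])]"
      using teq_eqr[where V="cmod sC" and W="tensor (cmod sC) (cmod sA)" and w="[(0, x0)]" and w'="[]" and v=c1]
      by (simp add: teq_zerol_c)
    also have "teq (cmod sC) (tensor (cmod sC) (cmod sA)) \<dots> []"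
      using teq_zeror[of "cmod sC" "tensor (cmod sC) (cmod sA)" c1] by simp
    finally show ?thesis .
  qed
  have bl: "teq (cmod sC) (tensor (cmod sC) (cmod sA)) [(sC r c1, [(c2, x0)])] [(c1, [(sC r c2, x0)])]" for r c1 c2
    using teq_bal[of "cmod sC" "tensor (cmod sC) (cmod sA)" r c1 "[(c2, x0)]"] by simp
  have "teq (cmod sC) (tensor (cmod sC) (cmod sA)) (concat (map (\<lambda>(c1, c2). [(c1, [(c2, x0)])]) P))
           (concat (map (\<lambda>(c1, c2). [(c1, [(c2, x0)])]) Q))"
    by (rule teq_map[OF assms, where g="\<lambda>c1 c2. [(c1, [(c2, x0)])]"])
       (simp_all add: teq_refl teq_addl_c ar teq_zerol_c zr bl)
  then show ?thesis by (simp add: concat_map_single2)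
qed

lemma CA_actcong:
  assumes "teq (cmod sC) (cmod sA) m m'"
  shows "teq (cmod sC) (cmod sA) (actCA m b) (actCA m' b)"
  unfolding actCA_def
  by (rule teq_map[OF assms, where g="\<lambda>c a. map (\<lambda>(h, x). (actC c h, a * x)) (\<rho>A b)"])
     (auto simp: teq_refl act_addl teq_map_split distrib_right teq_map_split_r act_zerol teq_map_nil
        teq_zerol_c teq_zeror_c act_smul1 sA_mult1[symmetric] intro!: teq_map_pw teq_bal_c)

lemma CA_actaddr: "teq (cmod sC) (cmod sA) (actCA m (a + b)) (actCA m a @ actCA m b)"
  unfolding actCA_def
proof (rule teq_trans[OF _ teq_interleave2])
  show "teq (cmod sC) (cmod sA) (concat (map (\<lambda>(c, aa). map (\<lambda>(h, x). (actC c h, aa * x)) (\<rho>A (a + b))) m))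
     (concat (map (\<lambda>(p, q). map (\<lambda>(h, x). (actC p h, q * x)) (\<rho>A a) @ map (\<lambda>(h, x). (actC p h, q * x)) (\<rho>A b)) m))"
    by (rule teq_concat_pw) (auto intro: map_rho[OF rA_add, simplified])
qed

lemma actCA_smul_eq: "map (\<lambda>(v, w). (sC r v, w)) (actCA m a) =
   concat (map (\<lambda>(c, x0). map (\<lambda>(h, x). (sC r (actC c h), x0 * x)) (\<rho>A a)) m)"
  by (induction m) (auto simp: actCA_def map_map_prod simp del: map_map)

lemma CA_actsmul1: "teq (cmod sC) (cmod sA) (actCA (map (\<lambda>(v, w). (sC r v, w)) m) a) (map (\<lambda>(v, w). (sC r v, w)) (actCA m a))"
  unfolding actCA_smul_eq by (simp add: actCA_def map_map_prod act_smul1 teq_refl del: map_map)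

lemma CA_actsmul2: "teq (cmod sC) (cmod sA) (actCA m (sA r a)) (map (\<lambda>(v, w). (sC r v, w)) (actCA m a))"
  unfolding actCA_smul_eq unfolding actCA_def
proof (rule teq_concat_pw)
  fix x assume "x \<in> set m"
  obtain c x0 where x: "x = (c, x0)" by (cases x)
  show "teq (cmod sC) (cmod sA) (case x of (c, aa) \<Rightarrow> map (\<lambda>(h, x). (actC c h, aa * x)) (\<rho>A (sA r a)))
          (case x of (c, x0) \<Rightarrow> map (\<lambda>(h, x). (sC r (actC c h), x0 * x)) (\<rho>A a))"
    using map_rho[OF rA_smul, of c x0 r a] by (simp add: x map_map_prod act_smul2 del: map_map)
qed

lemma CA_actone: "teq (cmod sC) (cmod sA) (actCA m 1) m"
proof -
  have "teq (cmod sC) (cmod sA) (actCA m 1) (concat (map (\<lambda>(c, x0). [(c, x0)]) m))"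
    unfolding actCA_def
  proof (rule teq_concat_pw)
    fix x assume "x \<in> set m"
    obtain c x0 where x: "x = (c, x0)" by (cases x)
    show "teq (cmod sC) (cmod sA) (case x of (c, a) \<Rightarrow> map (\<lambda>(h, x). (actC c h, a * x)) (\<rho>A 1))
          (case x of (c, x0) \<Rightarrow> [(c, x0)])"
      using map_rho[OF rA_one, of c x0] by (simp add: x act_one)
  qed
  then show ?thesis by (simp add: concat_map_single2)
qed

lemma actCA_concat2: "actCA (concat (map (\<lambda>(p, q). G p q) L)) b = concat (map (\<lambda>(p, q). actCA (G p q) b) L)"
  by (induction L) (auto simp: actCA_def)

lemma actCA_map: "actCA (map (\<lambda>(h, x). (actC c h, x0 * x)) R) b =
    concat (map (\<lambda>(h, x). map (\<lambda>(h', y). (actC c (h * h'), x0 * (x * y))) (\<rho>A b)) R)"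
  by (induction R) (auto simp: actCA_def act_mult mult.assoc)

lemma map_rhomult_eq: "map (\<lambda>(h, u). (actC c h, x0 * u)) (concat (map (\<lambda>(h, x). map (\<lambda>(h', y). (h * h', x * y)) (\<rho>A b)) R))
   = concat (map (\<lambda>(h, x). map (\<lambda>(h', y). (actC c (h * h'), x0 * (x * y))) (\<rho>A b)) R)"
  by (induction R) (auto simp: map_map_prod simp del: map_map)

lemma CA_actmult: "teq (cmod sC) (cmod sA) (actCA (actCA m a) b) (actCA m (a * b))"
proof -
  have "actCA (actCA m a) b = concat (map (\<lambda>(c, x0). concat (map (\<lambda>(h, x). map (\<lambda>(h', y). (actC c (h * h'), x0 * (x * y))) (\<rho>A b)) (\<rho>A a))) m)"
    by (simp add: actCA_def[of m a] actCA_concat2 actCA_map)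
  also have "teq (cmod sC) (cmod sA) \<dots> (actCA m (a * b))"
    unfolding actCA_def
  proof (rule teq_concat_pw)
    fix x assume "x \<in> set m"
    obtain c x0 where x: "x = (c, x0)" by (cases x)
    show "teq (cmod sC) (cmod sA) (case x of (c, x0) \<Rightarrow> concat (map (\<lambda>(h, x). map (\<lambda>(h', y). (actC c (h * h'), x0 * (x * y))) (\<rho>A b)) (\<rho>A a)))
          (case x of (c, aa) \<Rightarrow> map (\<lambda>(h, x). (actC c h, aa * x)) (\<rho>A (a * b)))"
      using teq_sym[OF map_rho[OF rA_mult, of c x0 a b]] by (simp add: x map_rhomult_eq)
  qed
  finally show ?thesis .
qed

lemma CA_rhocong:
  assumes "teq (cmod sC) (cmod sA) m m'"
  shows "teq (cmod sC) (tensor (cmod sC) (cmod sA)) (dl \<Delta>C m) (dl \<Delta>C m')"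
proof -
  let ?T = "tensor (cmod sC) (cmod sA)"
  have ar: "teq (cmod sC) ?T [(c1, [(c2, x0 + x0')])] [(c1, [(c2, x0)]), (c1, [(c2, x0')])]" for c1 c2 x0 x0'
  proof -
    have "teq (cmod sC) ?T [(c1, [(c2, x0 + x0')])] [(c1, [(c2, x0)] @ [(c2, x0')])]"
      using teq_eqr[where V="cmod sC" and W="?T" and w="[(c2, x0 + x0')]" and w'="[(c2, x0)] @ [(c2, x0')]" and v=c1]
      by (simp add: teq_addr_c)
    also have "teq (cmod sC) ?T \<dots> [(c1, [(c2, x0)]), (c1, [(c2, x0')])]"
      using teq_addr[of "cmod sC" ?T c1 "[(c2, x0)]" "[(c2, x0')]"] by simp
    finally show ?thesis by simp
  qed
  have zr: "teq (cmod sC) ?T [(c1, [(c2, 0)])] []" for c1 c2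
  proof -
    have "teq (cmod sC) ?T [(c1, [(c2, 0)])] [(c1, [])]"
      using teq_eqr[where V="cmod sC" and W="?T" and w="[(c2, 0)]" and w'="[]" and v=c1]
      by (simp add: teq_zeror_c)
    also have "teq (cmod sC) ?T \<dots> []"
      using teq_zeror[of "cmod sC" ?T c1] by simp
    finally show ?thesis .
  qed
  have bl: "teq (cmod sC) ?T [(sC r c1, [(c2, x0)])] [(c1, [(c2, sA r x0)])]" for r c1 c2 x0
  proof -
    have "teq (cmod sC) ?T [(sC r c1, [(c2, x0)])] [(c1, [(sC r c2, x0)])]"
      using teq_bal[of "cmod sC" ?T r c1 "[(c2, x0)]"] by simp
    also have "teq (cmod sC) ?T \<dots> [(c1, [(c2, sA r x0)])]"
      using teq_eqr[where V="cmod sC" and W="?T" and w="[(sC r c2, x0)]" and w'="[(c2, sA r x0)]" and v=c1]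
      by (simp add: teq_bal_c)
    finally show ?thesis .
  qed
  show ?thesis
    unfolding dl_def
  proof (rule teq_map[OF assms, where g="\<lambda>c x0. map (\<lambda>(p1, p2). (p1, [(p2, x0)])) (\<Delta>C c)"])
    fix v v' :: 'c and w :: 'a show "teq (cmod sC) ?T (map (\<lambda>(p1, p2). (p1, [(p2, w)])) (\<Delta>C (m_add (cmod sC) v v')))
       (map (\<lambda>(p1, p2). (p1, [(p2, w)])) (\<Delta>C v) @ map (\<lambda>(p1, p2). (p1, [(p2, w)])) (\<Delta>C v'))"
      using map_DC[OF DC_add[of v v'], of w] by simp
  next
    fix v :: 'c and w w' :: 'a show "teq (cmod sC) ?T (map (\<lambda>(p1, p2). (p1, [(p2, m_add (cmod sA) w w')])) (\<Delta>C v))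
       (map (\<lambda>(p1, p2). (p1, [(p2, w)])) (\<Delta>C v) @ map (\<lambda>(p1, p2). (p1, [(p2, w')])) (\<Delta>C v))"
    proof -
      have "teq (cmod sC) ?T (concat (map (\<lambda>(p1, p2). [(p1, [(p2, w + w')])]) (\<Delta>C v)))
          (concat (map (\<lambda>(p1, p2). [(p1, [(p2, w)])] @ [(p1, [(p2, w')])]) (\<Delta>C v)))"
        by (rule teq_concat_pw) (auto simp: ar)
      also have "teq (cmod sC) ?T \<dots> (concat (map (\<lambda>(p1, p2). [(p1, [(p2, w)])]) (\<Delta>C v)) @ concat (map (\<lambda>(p1, p2). [(p1, [(p2, w')])]) (\<Delta>C v)))"
        by (rule teq_interleave2)
      finally show ?thesis by (simp add: concat_map_single2)
    qed
  next
    fix w :: 'a show "teq (cmod sC) ?T (map (\<lambda>(p1, p2). (p1, [(p2, w)])) (\<Delta>C (m_zero (cmod sC)))) []"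
      using map_DC[OF DC_zero, of w] by simp
  next
    fix v :: 'c show "teq (cmod sC) ?T (map (\<lambda>(p1, p2). (p1, [(p2, m_zero (cmod sA))])) (\<Delta>C v)) []"
      by (simp add: teq_map_nil zr)
  next
    fix r and v :: 'c and w :: 'a show "teq (cmod sC) ?T (map (\<lambda>(p1, p2). (p1, [(p2, w)])) (\<Delta>C (m_smul (cmod sC) r v)))
       (map (\<lambda>(p1, p2). (p1, [(p2, m_smul (cmod sA) r w)])) (\<Delta>C v))"
    proof -
      have "teq (cmod sC) ?T (map (\<lambda>(p1, p2). (p1, [(p2, w)])) (\<Delta>C (sC r v)))
          (map (\<lambda>(p1, p2). (sC r p1, [(p2, w)])) (\<Delta>C v))"
        using map_DC[OF DC_smul[of r v], of w] by (simp add: map_map_prod del: map_map)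
      also have "teq (cmod sC) ?T \<dots> (map (\<lambda>(p1, p2). (p1, [(p2, sA r w)])) (\<Delta>C v))"
        by (rule teq_map_pw) (rule bl)
      finally show ?thesis by simp
    qed
  qed (simp_all add: teq_refl)
qed

lemma dl_smul_eq: "map (\<lambda>(c, x). (sC r c, x)) (dl \<Delta>C m) =
   concat (map (\<lambda>(p, q). map (\<lambda>(p1, p2). (sC r p1, [(p2, q)])) (\<Delta>C p)) m)"
  by (induction m) (auto simp: dl_def map_map_prod simp del: map_map)

lemma CA_rhosmul: "teq (cmod sC) (tensor (cmod sC) (cmod sA)) (dl \<Delta>C (map (\<lambda>(v, w). (sC r v, w)) m))
   (map (\<lambda>(c, x). (sC r c, x)) (dl \<Delta>C m))"
  unfolding dl_smul_eq
  unfolding dl_def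
  apply (simp add: map_map_prod del: map_map)
proof (rule teq_concat_pw)
  fix x assume "x \<in> set m"
  obtain c x0 where x: "x = (c, x0)" by (cases x)
  show "teq (cmod sC) (tensor (cmod sC) (cmod sA))
          (case x of (p, q) \<Rightarrow> map (\<lambda>(p1, p2). (p1, [(p2, q)])) (\<Delta>C (sC r p)))
          (case x of (p, q) \<Rightarrow> map (\<lambda>(p1, p2). (sC r p1, [(p2, q)])) (\<Delta>C p))"
    using map_DC[OF DC_smul[of r c], of x0] by (simp add: x map_map_prod del: map_map)
qed

end


lemma teq_swap2:
  "teq V W (concat (map (\<lambda>(a, b). concat (map (\<lambda>(c, d). f a b c d) L2)) L1))
           (concat (map (\<lambda>(c, d). concat (map (\<lambda>(a, b). f a b c d) L1)) L2))"
  using teq_swap[of V W "\<lambda>x y. f (fst x) (snd x) (fst y) (snd y)" L2 L1]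
  by (simp add: case_prod_unfold)

lemma dl_concat2: "dl \<Delta> (concat (map (\<lambda>(p, q). G p q) L)) = concat (map (\<lambda>(p, q). dl \<Delta> (G p q)) L)"
  by (induction L) (auto simp: dl_def)

lemma concat_map_concat2: "concat (map F (concat (map (\<lambda>(p, q). G p q) L))) = concat (map (\<lambda>(p, q). concat (map F (G p q))) L)"
  by (induction L) auto

context DH
begin

lemma dl_map_phi: "dl \<Delta>C (map (\<lambda>(h, x). (actC c h, x0 * x)) R) =
   concat (map (\<lambda>(h, x). map (\<lambda>(p1, p2). (p1, [(p2, x0 * x)])) (\<Delta>C (actC c h))) R)"
  by (induction R) (auto simp: dl_def)

lemma map_psi_concat: "map (\<lambda>(c1, c2). (c1, [(c2, y)])) (concat (map (\<lambda>(p, q). map (\<lambda>(h1, h2). (actC p h1, actC q h2)) (\<Delta>H h)) D))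
  = concat (map (\<lambda>(p, q). map (\<lambda>(h1, h2). (actC p h1, [(actC q h2, y)])) (\<Delta>H h)) D)"
  by (induction D) (auto simp: map_map_prod simp del: map_map)

lemma actCA_single: "actCA [(q, x0)] b = map (\<lambda>(h', y). (actC q h', x0 * y)) (\<rho>A b)"
  by (simp add: actCA_def)

abbreviation "MCA \<equiv> tensor (cmod sC) (cmod sA)"

lemma teq_addr_T: "teq V (tensor X Y) [(v, w @ w')] [(v, w), (v, w')]"
  using teq_addr[of V "tensor X Y" v w w'] by simp
lemma teq_zeror_T: "teq V (tensor X Y) [(v, [])] []"
  using teq_zeror[of V "tensor X Y" v] by simp

lemma CA_coass_pw: "teq (cmod sC) (tensor (cmod sC) MCA)
    (dl \<Delta>C (map (\<lambda>(p1, p2). (p1, [(p2, x0)])) (\<Delta>C c)))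
    (dr (dl \<Delta>C) (map (\<lambda>(p1, p2). (p1, [(p2, x0)])) (\<Delta>C c)))"
proof -
  let ?F = "\<lambda>x L. [(x, map (\<lambda>(y, z). (y, [(z, x0)])) L)]"
  have "dl \<Delta>C (map (\<lambda>(p1, p2). (p1, [(p2, x0)])) (\<Delta>C c)) = concat (map (\<lambda>(x, L). ?F x L) (dl \<Delta>C (\<Delta>C c)))"
    by (simp only: concat_map_dl) (simp add: dl_def map_map_prod concat_map_single2 del: map_map)
  also have "teq (cmod sC) (tensor (cmod sC) MCA) \<dots> (concat (map (\<lambda>(x, L). ?F x L) (dr \<Delta>C (\<Delta>C c))))"
  proof (rule teq_map[OF DC_coass, where g="?F"])
    fix v and w w' :: "('c \<times> 'c) list" assume "m_eq (tensor (cmod sC) (cmod sC)) w w'"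
    then have "teq (cmod sC) MCA (map (\<lambda>(y, z). (y, [(z, x0)])) w) (map (\<lambda>(y, z). (y, [(z, x0)])) w')"
      using map_DC by simp
    then show "teq (cmod sC) (tensor (cmod sC) MCA) (?F v w) (?F v w')"
      using teq_eqr[where V="cmod sC" and W="tensor (cmod sC) MCA"] by simp
  next
    fix r v and w :: "('c \<times> 'c) list"
    show "teq (cmod sC) (tensor (cmod sC) MCA) (?F (m_smul (cmod sC) r v) w) (?F v (m_smul (tensor (cmod sC) (cmod sC)) r w))"
      using teq_bal_g[where s=sC and W="tensor (cmod sC) MCA" and r=r and v=v and w="map (\<lambda>(y, z). (y, [(z, x0)])) w"]
      by (simp add: map_map_prod del: map_map)
  qed (simp_all add: teq_refl teq_addl_c teq_addr_T teq_zerol_c teq_zeror_T)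
  also have "concat (map (\<lambda>(x, L). ?F x L) (dr \<Delta>C (\<Delta>C c))) = dr (dl \<Delta>C) (map (\<lambda>(p1, p2). (p1, [(p2, x0)])) (\<Delta>C c))"
    by (simp only: concat_map_dr) (simp add: dr_def dl_def map_map_prod concat_map_single2 del: map_map)
  finally show ?thesis .
qed

lemma CA_coass: "teq (cmod sC) (tensor (cmod sC) MCA) (dl \<Delta>C (dl \<Delta>C m)) (dr (dl \<Delta>C) (dl \<Delta>C m))"
proof -
  have e1: "dl \<Delta>C (dl \<Delta>C m) = concat (map (\<lambda>(c, x0). dl \<Delta>C (map (\<lambda>(p1, p2). (p1, [(p2, x0)])) (\<Delta>C c))) m)"
    by (simp only: dl_def[of \<Delta>C m] dl_concat2)
  have e2: "dr (dl \<Delta>C) (dl \<Delta>C m) = concat (map (\<lambda>(c, x0). dr (dl \<Delta>C) (map (\<lambda>(p1, p2). (p1, [(p2, x0)])) (\<Delta>C c))) m)"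
    by (induction m) (auto simp: dl_def[of \<Delta>C] dr_def)
  show ?thesis unfolding e1 e2
    by (rule teq_concat_pw) (auto simp: CA_coass_pw)
qed

lemma CA_counit_eq: "msum MCA (map (\<lambda>(c, x). m_smul MCA (\<epsilon>C c) x) (dl \<Delta>C m)) =
   concat (map (\<lambda>(p, q). map (\<lambda>(p1, p2). (sC (\<epsilon>C p1) p2, q)) (\<Delta>C p)) m)"
  by (induction m) (auto simp: msum_tensor dl_def map_map_prod concat_map_single2 simp del: map_map)

lemma CA_counit: "teq (cmod sC) (cmod sA) (msum MCA (map (\<lambda>(c, x). m_smul MCA (\<epsilon>C c) x) (dl \<Delta>C m))) m"
proof -
  have "teq (cmod sC) (cmod sA) (concat (map (\<lambda>(p, q). map (\<lambda>(p1, p2). (sC (\<epsilon>C p1) p2, q)) (\<Delta>C p)) m))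
          (concat (map (\<lambda>(p, q). [(p, q)]) m))"
  proof (rule teq_concat_pw)
    fix x assume "x \<in> set m"
    obtain p q where x: "x = (p, q)" by (cases x)
    have "map (\<lambda>(p1, p2). (sC (\<epsilon>C p1) p2, q)) (\<Delta>C p) = map (\<lambda>x. (x, q)) (map (\<lambda>(p1, p2). sC (\<epsilon>C p1) p2) (\<Delta>C p))"
      by (simp add: case_prod_beta)
    also have "teq (cmod sC) (cmod sA) \<dots> [(p, q)]"
      using teq_sym[OF teq_sum_left[where s=sC and xs="map (\<lambda>(p1, p2). sC (\<epsilon>C p1) p2) (\<Delta>C p)" and W="cmod sA" and w=q]]
      by (simp add: DC_cl)
    finally show "teq (cmod sC) (cmod sA) (case x of (p, q) \<Rightarrow> map (\<lambda>(p1, p2). (sC (\<epsilon>C p1) p2, q)) (\<Delta>C p))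
          (case x of (p, q) \<Rightarrow> [(p, q)])" by (simp add: x)
  qed
  then show ?thesis unfolding CA_counit_eq by (simp add: concat_map_single2)
qed

lemma CA_compat_pw: "teq (cmod sC) MCA
   (concat (map (\<lambda>(h, x). map (\<lambda>(p1, p2). (p1, [(p2, x0 * x)])) (\<Delta>C (actC c h))) (\<rho>A a)))
   (concat (map (\<lambda>(p, q). map (\<lambda>(h, b). (actC p h, map (\<lambda>(h', y). (actC q h', x0 * y)) (\<rho>A b))) (\<rho>A a)) (\<Delta>C c)))"
proof -
  have "teq (cmod sC) MCA
   (concat (map (\<lambda>(h, x). map (\<lambda>(p1, p2). (p1, [(p2, x0 * x)])) (\<Delta>C (actC c h))) (\<rho>A a)))
   (concat (map (\<lambda>(h, x). concat (map (\<lambda>(p, q). map (\<lambda>(h1, h2). (actC p h1, [(actC q h2, x0 * x)])) (\<Delta>H h)) (\<Delta>C c))) (\<rho>A a)))"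
  proof (rule teq_concat_pw)
    fix z assume "z \<in> set (\<rho>A a)"
    obtain h x where z: "z = (h, x)" by (cases z)
    show "teq (cmod sC) MCA (case z of (h, x) \<Rightarrow> map (\<lambda>(p1, p2). (p1, [(p2, x0 * x)])) (\<Delta>C (actC c h)))
       (case z of (h, x) \<Rightarrow> concat (map (\<lambda>(p, q). map (\<lambda>(h1, h2). (actC p h1, [(actC q h2, x0 * x)])) (\<Delta>H h)) (\<Delta>C c)))"
      using map_DC[OF DC_act[of c h], of "x0 * x"] by (simp add: z map_psi_concat)
  qed
  also have "teq (cmod sC) MCA \<dots>
     (concat (map (\<lambda>(p, q). concat (map (\<lambda>(h, x). map (\<lambda>(h1, h2). (actC p h1, [(actC q h2, x0 * x)])) (\<Delta>H h)) (\<rho>A a))) (\<Delta>C c)))"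
    by (rule teq_swap2)
  also have "teq (cmod sC) MCA \<dots>
     (concat (map (\<lambda>(p, q). map (\<lambda>(h, b). (actC p h, map (\<lambda>(h', y). (actC q h', x0 * y)) (\<rho>A b))) (\<rho>A a)) (\<Delta>C c)))"
  proof (rule teq_concat_pw)
    fix z assume "z \<in> set (\<Delta>C c)"
    obtain p q where z: "z = (p, q)" by (cases z)
    let ?F = "\<lambda>h L. [(actC p h, map (\<lambda>(h', y). (actC q h', x0 * y)) L)]"
    have "concat (map (\<lambda>(h, x). map (\<lambda>(h1, h2). (actC p h1, [(actC q h2, x0 * x)])) (\<Delta>H h)) (\<rho>A a))
        = concat (map (\<lambda>(x, L). ?F x L) (dl \<Delta>H (\<rho>A a)))"
      by (simp only: concat_map_dl) (simp add: concat_map_single2)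
    also have "teq (cmod sC) MCA \<dots> (concat (map (\<lambda>(x, L). ?F x L) (dr \<rho>A (\<rho>A a))))"
    proof (rule teq_map[OF rA_coass, where g="?F"])
      fix v and w w' :: "('h \<times> 'a) list" assume "m_eq (tensor (cmod sH) (cmod sA)) w w'"
      then have "teq (cmod sC) (cmod sA) (map (\<lambda>(h', y). (actC q h', x0 * y)) w) (map (\<lambda>(h', y). (actC q h', x0 * y)) w')"
        using map_rho by simp
      then show "teq (cmod sC) MCA (?F v w) (?F v w')"
        using teq_eqr[where V="cmod sC" and W="tensor (cmod sC) (cmod sA)"] by simp
    next
      fix r v and w :: "('h \<times> 'a) list"
      show "teq (cmod sC) MCA (?F (m_smul (cmod sH) r v) w) (?F v (m_smul (tensor (cmod sH) (cmod sA)) r w))"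
        using teq_bal_g[where s=sC and W=MCA and r=r and v="actC p v" and w="map (\<lambda>(h', y). (actC q h', x0 * y)) w"]
        by (simp add: map_map_prod act_smul2 del: map_map)
    qed (simp_all add: teq_refl act_addr teq_addl_c teq_addr_T act_zeror teq_zerol_c teq_zeror_T)
    also have "concat (map (\<lambda>(x, L). ?F x L) (dr \<rho>A (\<rho>A a))) =
        map (\<lambda>(h, b). (actC p h, map (\<lambda>(h', y). (actC q h', x0 * y)) (\<rho>A b))) (\<rho>A a)"
      by (simp only: concat_map_dr) (simp add: concat_map_single2)
    finally show "teq (cmod sC) MCA
        (case z of (p, q) \<Rightarrow> concat (map (\<lambda>(h, x). map (\<lambda>(h1, h2). (actC p h1, [(actC q h2, x0 * x)])) (\<Delta>H h)) (\<rho>A a)))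
        (case z of (p, q) \<Rightarrow> map (\<lambda>(h, b). (actC p h, map (\<lambda>(h', y). (actC q h', x0 * y)) (\<rho>A b))) (\<rho>A a))"
      by (simp add: z)
  qed
  finally show ?thesis .
qed

lemma CA_compat: "teq (cmod sC) MCA (dl \<Delta>C (actCA m a))
    (concat (map (\<lambda>(c, x). map (\<lambda>(h, b). (actC c h, actCA x b)) (\<rho>A a)) (dl \<Delta>C m)))"
proof -
  have e1: "dl \<Delta>C (actCA m a) = concat (map (\<lambda>(c, x0). concat (map (\<lambda>(h, x). map (\<lambda>(p1, p2). (p1, [(p2, x0 * x)])) (\<Delta>C (actC c h))) (\<rho>A a))) m)"
    by (simp only: actCA_def dl_concat2 dl_map_phi)
  have e2: "concat (map (\<lambda>(c, x). map (\<lambda>(h, b). (actC c h, actCA x b)) (\<rho>A a)) (dl \<Delta>C m)) =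
     concat (map (\<lambda>(c, x0). concat (map (\<lambda>(p, q). map (\<lambda>(h, b). (actC p h, map (\<lambda>(h', y). (actC q h', x0 * y)) (\<rho>A b))) (\<rho>A a)) (\<Delta>C c))) m)"
    by (simp only: dl_def concat_map_concat2) (simp add: map_map_prod actCA_single del: map_map)
  show ?thesis unfolding e1 e2
    by (rule teq_concat_pw) (auto simp: CA_compat_pw)
qed

end


lemma concat_concat2: "concat (concat (map (\<lambda>(p, q). G p q) L)) = concat (map (\<lambda>(p, q). concat (G p q)) L)"
  by (induction L) auto

context DH
begin

lemma CA_dhm: "doi_hopf_module sH sA \<rho>A sC \<Delta>C \<epsilon>C actC MCA actCA (dl \<Delta>C)"
  unfolding doi_hopf_module_def
  apply (intro conjI allI impI)
  subgoal by (rule setoid_tensor[OF mC])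
  subgoal by (simp add: CA_actcong)
  subgoal by (simp add: actCA_def teq_refl)
  subgoal by (simp add: CA_actaddr)
  subgoal by (simp add: CA_actsmul1)
  subgoal by (simp add: CA_actsmul2)
  subgoal by (simp add: CA_actone)
  subgoal by (simp add: CA_actmult)
  subgoal by (simp add: CA_rhocong)
  subgoal by (simp add: dl_def teq_refl)
  subgoal using CA_rhosmul by simp
  subgoal by (rule CA_coass)
  subgoal using CA_counit by simp
  subgoal by (rule CA_compat)
  done

lemma g_sum_r: "\<gamma> p (sum_list (map (\<lambda>(q1, q2). f q1 q2) N)) = sum_list (map (\<lambda>(q1, q2). \<gamma> p (f q1 q2)) N)"
  by (induction N) (auto simp: g_addr g_zeror)

lemma E_inner2: "sum_list (map (\<lambda>(v, w). sA (\<epsilon>C v) w) (concat (map (\<lambda>(q1, q2). map (\<lambda>(h, y). (actC q2 h, y)) (\<rho>A (\<gamma> p q1))) N)))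
   = \<gamma> p (sum_list (map (\<lambda>(q1, q2). sC (\<epsilon>C q2) q1) N))"
  by (induction N) (auto simp: map_map_prod E_rho1 g_smulr g_addr g_zeror simp del: map_map)

lemma E_outer: "sum_list (map (\<lambda>(v, w). sA (\<epsilon>C v) w)
        (concat (map (\<lambda>(p1, p2). concat (map (\<lambda>(q1, q2). map (\<lambda>(h, y). (actC q2 h, y)) (\<rho>A (\<gamma> p1 q1))) (\<Delta>C p2))) L)))
   = sum_list (map (\<lambda>(p1, p2). \<gamma> p1 (sum_list (map (\<lambda>(q1, q2). sC (\<epsilon>C q2) q1) (\<Delta>C p2)))) L)"
  by (induction L) (auto simp: E_inner2 simp del: map_map)

lemma norm_CA_imp_tot:
  assumes N: "integral_normalizes MCA actCA (dl \<Delta>C) \<gamma>"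
  shows "total_integral sA \<Delta>C \<epsilon>C \<gamma>"
  unfolding total_integral_def
proof
  fix c
  have t: "teq (cmod sC) (cmod sA) (msum MCA (concat (map (\<lambda>(c', y). map (\<lambda>(d, x). actCA x (\<gamma> c' d)) (dl \<Delta>C y)) (dl \<Delta>C [(c, 1)])))) [(c, 1)]"
    using N unfolding integral_normalizes_def tensor_simps by blast
  have eq: "msum MCA (concat (map (\<lambda>(c', y). map (\<lambda>(d, x). actCA x (\<gamma> c' d)) (dl \<Delta>C y)) (dl \<Delta>C [(c, 1)])))
     = concat (map (\<lambda>(p1, p2). concat (map (\<lambda>(q1, q2). map (\<lambda>(h, y). (actC q2 h, y)) (\<rho>A (\<gamma> p1 q1))) (\<Delta>C p2))) (\<Delta>C c))"
    by (simp add: msum_tensor dl_def map_map_prod actCA_single concat_concat2 del: map_map)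
  have "sA (\<epsilon>C c) 1 = sum_list (map (\<lambda>(v, w). sA (\<epsilon>C v) w) [(c, 1)])" by simp
  also have "\<dots> = sum_list (map (\<lambda>(v, w). sA (\<epsilon>C v) w)
        (concat (map (\<lambda>(p1, p2). concat (map (\<lambda>(q1, q2). map (\<lambda>(h, y). (actC q2 h, y)) (\<rho>A (\<gamma> p1 q1))) (\<Delta>C p2))) (\<Delta>C c))))"
    using E_teq[OF t] by (simp only: eq)
  also have "\<dots> = sum_list (map (\<lambda>(p1, p2). \<gamma> p1 p2) (\<Delta>C c))"
    by (simp only: E_outer DC_cr)
  finally show "sum_list (map (\<lambda>(c1, c2). \<gamma> c1 c2) (\<Delta>C c)) = sA (\<epsilon>C c) 1" by simp
qed

end

theorem proposition2p1p11:
  fixes sH :: "'k::comm_ring_1 \<Rightarrow> 'h::ring_1 \<Rightarrow> 'h"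
    and \<Delta>H :: "'h \<Rightarrow> ('h \<times> 'h) list" and \<epsilon>H :: "'h \<Rightarrow> 'k"
    and sA :: "'k \<Rightarrow> 'a::ring_1 \<Rightarrow> 'a" and \<rho>A :: "'a \<Rightarrow> ('h \<times> 'a) list"
    and sC :: "'k \<Rightarrow> 'c::ab_group_add \<Rightarrow> 'c" and \<Delta>C :: "'c \<Rightarrow> ('c \<times> 'c) list"
    and \<epsilon>C :: "'c \<Rightarrow> 'k" and actC :: "'c \<Rightarrow> 'h \<Rightarrow> 'c"
    and \<gamma> :: "'c \<Rightarrow> 'c \<Rightarrow> 'a"
  assumes datum: "doi_hopf_datum sH \<Delta>H \<epsilon>H sA \<rho>A sC \<Delta>C \<epsilon>C actC"
    and integral: "A_integral sH \<Delta>H sA \<rho>A sC \<Delta>C actC \<gamma>"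
  shows
    "(total_integral sA \<Delta>C \<epsilon>C \<gamma> \<longleftrightarrow>
       (\<forall>c a. teq (cmod sC) (cmod sA)
          (concat (map (\<lambda>(c12, c3). concat (map (\<lambda>(c1, c2).
              map (\<lambda>(h, x). (actC c3 h, a * x)) (\<rho>A (\<gamma> c1 c2))) (\<Delta>C c12))) (\<Delta>C c)))
          [(c, a)]))
     \<and>
     (total_integral sA \<Delta>C \<epsilon>C \<gamma> \<longleftrightarrow>
       (\<forall>(M :: (('c \<times> 'a) list, 'k) kmod) actM \<rho>M.
          doi_hopf_module sH sA \<rho>A sC \<Delta>C \<epsilon>C actC M actM \<rho>M \<longrightarrow>
          integral_normalizes M actM \<rho>M \<gamma>))
     \<and>
     (total_integral sA \<Delta>C \<epsilon>C \<gamma> \<longrightarrow>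
       (\<forall>(M :: ('m, 'k) kmod) actM \<rho>M.
          doi_hopf_module sH sA \<rho>A sC \<Delta>C \<epsilon>C actC M actM \<rho>M \<longrightarrow>
          integral_normalizes M actM \<rho>M \<gamma>))"
proof -
  interpret DH sH \<Delta>H \<epsilon>H sA \<rho>A sC \<Delta>C \<epsilon>C actC \<gamma>
    using datum integral by unfold_locales
  have 1: "total_integral sA \<Delta>C \<epsilon>C \<gamma> \<longleftrightarrow>
       (\<forall>c a. teq (cmod sC) (cmod sA)
          (concat (map (\<lambda>(c12, c3). concat (map (\<lambda>(c1, c2).
              map (\<lambda>(h, x). (actC c3 h, a * x)) (\<rho>A (\<gamma> c1 c2))) (\<Delta>C c12))) (\<Delta>C c)))
          [(c, a)])"
    using tot_imp_2 two_imp_tot by blast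
  have 2: "total_integral sA \<Delta>C \<epsilon>C \<gamma> \<longleftrightarrow>
       (\<forall>(M :: (('c \<times> 'a) list, 'k) kmod) actM \<rho>M.
          doi_hopf_module sH sA \<rho>A sC \<Delta>C \<epsilon>C actC M actM \<rho>M \<longrightarrow>
          integral_normalizes M actM \<rho>M \<gamma>)"
    using tot_imp_norm CA_dhm norm_CA_imp_tot by blast
  have 3: "total_integral sA \<Delta>C \<epsilon>C \<gamma> \<longrightarrow>
       (\<forall>(M :: ('m, 'k) kmod) actM \<rho>M.
          doi_hopf_module sH sA \<rho>A sC \<Delta>C \<epsilon>C actC M actM \<rho>M \<longrightarrow>
          integral_normalizes M actM \<rho>M \<gamma>)"
    using tot_imp_norm by blast
  show ?thesis using 1 2 3 by blast
qed


end
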